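(* Let $1\le k<d$ and $\rho\in(0,1-\frac kd)$. There exist positive constants $r_0$ and $\sigma_0$ such that the following holds. Run LISR-$k$ with parameters $\rho,r_0$ from an initial point $x^0$ and initial matrices $B_1^0,\dots,B_n^0$ satisfying $\|x^0-x^*\|\le r_0$, $B_i^0\succeq\omega^0\nabla^2 f_i(x^0)$ and $\nu\big((\omega^0)^{-1}B_i^0,\nabla^2 f_i(x^0)\big)\le\sigma_0$ for all $i\in\{1,\dots,n\}$. Then all iterates are well defined, $(\omega^{t+1})^{-1}B_{i_t}^{t+1}\succeq\nabla^2 f_{i_t}(z_{i_t}^{t+1})$ for all $t\ge0$, and for all $t\ge0$ $$\|x^{t+1}-x^*\|\le\rho^{\lceil\frac{t+1}{n}\rceil}\|x^0-x^*\|,$$ $$\nu\big((\omega^{t+1})^{-1}B_{i_t}^{t+1},\nabla^2 f_{i_t}(z_{i_t}^{t+1})\big)\le\Big(1-\frac kd\Big)^{\lceil\frac{t+1}{n}\rceil}\delta,$$ where $$\delta:=\Big(\sigma_0+\frac{4MdL^{3/2}\mu^{-1}r_0}{1-(1-k/d)^{-1}\rho}\Big)\exp\Big(\frac{4M\sqrt L\,r_0}{1-\rho}\Big).$$ (The case $k=1$ is the statement for LISR-1.)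
   Context: Problem: minimize $f(x)=\frac1n\sum_{i=1}^n f_i(x)$ over $x\in\mathbb{R}^d$, where each $f_i$ is twice differentiable with $\mu I\preceq\nabla^2 f_i(x)\preceq LI$ for all $x$ ($0<\mu\le L$) and $\|\nabla^2 f_i(x)-\nabla^2 f_i(y)\|\le\tilde L\|x-y\|$ for all $x,y$; $x^*$ is the unique minimizer of $f$. Set $\kappa=L/\mu$ and $M=\tilde L\mu^{-3/2}$. For symmetric positive definite $G\succeq A$, $\nu(G,A)=\frac{d\kappa\,\mathrm{tr}(G-A)}{\mathrm{tr}(A)}$. For a symmetric $C\in\mathbb{R}^{d\times d}$ and $1\le k<d$, $E_k(C)=[e_{i_1},\dots,e_{i_k}]\in\mathbb{R}^{d\times k}$ where $i_1,\dots,i_k$ are the indices of the $k$ largest diagonal entries of $C$. For symmetric positive definite $G\succeq A$ and full-rank $U\in\mathbb{R}^{d\times k}$: $\mathrm{SR}\text{-}k(G,A,U)=G$ if $GU=AU$, otherwise $G-(G-A)U(U^\top(G-A)U)^{\dagger}U^\top(G-A)$. Algorithm LISR-$k$ (parameters $\rho\in(0,1)$, $r_0>0$): let $\omega^t=(1+M\sqrt L\,r_0\rho^{\lceil t/n\rceil})^2$ if $t\equiv0\pmod n$ (so $\omega^0=(1+M\sqrt Lr_0)^2$) and $\omega^t=1$ otherwise. Given $x^0$ and symmetric positive definite $B_1^0,\dots,B_n^0$, set $z_i^0=x^0$ for all $i$. For $t=0,1,2,\dots$, let $i_t=(t\bmod n)+1$ and set: $x^{t+1}=(\sum_i B_i^t)^{-1}(\sum_i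 B_i^tz_i^t-\sum_i\nabla f_i(z_i^t))$; $z_{i_t}^{t+1}=x^{t+1}$ and $z_i^{t+1}=z_i^t$ for $i\ne i_t$; $B_{i_t}^{t+1}=\omega^{t+1}\,\mathrm{SR}\text{-}k\big(B_{i_t}^t,\nabla^2 f_{i_t}(z_{i_t}^{t+1}),E_k(B_{i_t}^t-\nabla^2 f_{i_t}(z_{i_t}^{t+1}))\big)$ and $B_i^{t+1}=\omega^{t+1}B_i^t$ for $i\ne i_t$. LISR-1 is the case $k=1$ (greedy symmetric rank-1 update). *)

theory Defs
  imports "HOL-Analysis.Analysis"
begin

definition psd :: "real^'n^'n \<Rightarrow> bool" where
  "psd A \<longleftrightarrow> (\<forall>v. 0 \<le> v \<bullet> (A *v v))"

definition loewner_le :: "real^'n^'n \<Rightarrow> real^'n^'n \<Rightarrow> bool" where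
  "loewner_le A B \<longleftrightarrow> psd (B - A)"

definition symmetric_matrix :: "real^'n^'n \<Rightarrow> bool" where
  "symmetric_matrix A \<longleftrightarrow> transpose A = A"

definition pos_def :: "real^'n^'n \<Rightarrow> bool" where
  "pos_def A \<longleftrightarrow> symmetric_matrix A \<and> (\<forall>v. v \<noteq> 0 \<longrightarrow> 0 < v \<bullet> (A *v v))"

definition mat_norm :: "real^'n^'m \<Rightarrow> real" where
  "mat_norm A = onorm (\<lambda>v. A *v v)"

definition pinv :: "real^'n^'m \<Rightarrow> real^'m^'n" where
  "pinv A = (THE X. A ** X ** A = A \<and> X ** A ** X = X \<and>
              transpose (A ** X) = A ** X \<and> transpose (X ** A) = X ** A)"

definition nu :: "real \<Rightarrow> real^'n^'n \<Rightarrow> real^'n^'n \<Rightarrow> real" where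
  "nu \<kappa> G A = real CARD('n) * \<kappa> * trace (G - A) / trace A"

(* U is (a version of) E_k(C): the columns of U are the standard basis vectors
   e_i for i ranging over the indices of the k = CARD('k) largest diagonal
   entries of C (ties broken arbitrarily, column order arbitrary). *)
definition is_Ek :: "real^'d^'d \<Rightarrow> real^'k^'d \<Rightarrow> bool" where
  "is_Ek C U \<longleftrightarrow> (\<exists>\<sigma>::'k \<Rightarrow> 'd. inj \<sigma> \<and>
      (\<forall>i. i \<notin> range \<sigma> \<longrightarrow> (\<forall>j. C$i$i \<le> C$(\<sigma> j)$(\<sigma> j))) \<and>
      U = (\<chi> r c. if r = \<sigma> c then 1 else 0))"

definition SRk :: "real^'d^'d \<Rightarrow> real^'d^'d \<Rightarrow> real^'k^'d \<Rightarrow> real^'d^'d" where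
  "SRk G A U = (if G ** U = A ** U then G
     else G - (G - A) ** U ** pinv (transpose U ** (G - A) ** U) ** transpose U ** (G - A))"

definition lisr_omega :: "real \<Rightarrow> real \<Rightarrow> real \<Rightarrow> real \<Rightarrow> nat \<Rightarrow> nat \<Rightarrow> real" where
  "lisr_omega M L r0 \<rho> n t =
     (if t mod n = 0 then (1 + M * sqrt L * r0 * \<rho> ^ nat \<lceil>real t / real n\<rceil>)\<^sup>2 else 1)"

definition lisr_run :: "nat \<Rightarrow> (nat \<Rightarrow> real^'d \<Rightarrow> real^'d) \<Rightarrow> (nat \<Rightarrow> real^'d \<Rightarrow> real^'d^'d)
    \<Rightarrow> (nat \<Rightarrow> real) \<Rightarrow> (nat \<Rightarrow> real^'d) \<Rightarrow> (nat \<Rightarrow> nat \<Rightarrow> real^'d)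
    \<Rightarrow> (nat \<Rightarrow> nat \<Rightarrow> real^'d^'d) \<Rightarrow> (nat \<Rightarrow> real^'k^'d) \<Rightarrow> bool" where
  "lisr_run n g H om x z B U \<longleftrightarrow>
     (\<forall>i\<in>{1..n}. z i 0 = x 0) \<and>
     (\<forall>t. let it = t mod n + 1 in
        x (Suc t) = matrix_inv (\<Sum>i\<in>{1..n}. B i t) *v
                      ((\<Sum>i\<in>{1..n}. B i t *v z i t) - (\<Sum>i\<in>{1..n}. g i (z i t))) \<and>
        (\<forall>i\<in>{1..n}. z i (Suc t) = (if i = it then x (Suc t) else z i t)) \<and>
        is_Ek (B it t - H it (z it (Suc t))) (U t) \<and>
        (\<forall>i\<in>{1..n}. B i (Suc t) =
            (if i = it then om (Suc t) *\<^sub>R SRk (B i t) (H i (z i (Suc t))) (U t)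
             else om (Suc t) *\<^sub>R B i t)))"

end

theory Submission
  imports Defs
begin


lemma dot_mv_transpose: "x \<bullet> ((A::real^_^_) *v y) = (transpose A *v x) \<bullet> y"
  by (simp only: transpose_matrix_vector dot_lmul_matrix)

lemma sym_dot: "symmetric_matrix A \<Longrightarrow> x \<bullet> (A *v y) = y \<bullet> (A *v x)"
  by (metis dot_mv_transpose inner_commute symmetric_matrix_def)

lemma loewner_le_iff: "loewner_le A B \<longleftrightarrow> (\<forall>v. v \<bullet> (A *v v) \<le> v \<bullet> (B *v v))"
  by (simp add: loewner_le_def psd_def matrix_vector_mult_diff_rdistrib inner_diff_right)

lemma axis_dot_mv: "axis i 1 \<bullet> (A *v axis j (1::real)) = A $ i $ j"
  by (simp add: matrix_vector_mult_basis column_def inner_axis')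

lemma trace_as_dots: "trace (A::real^'n^'n) = (\<Sum>i\<in>UNIV. axis i 1 \<bullet> (A *v axis i 1))"
  by (simp add: trace_def axis_dot_mv)

lemma mv_component: "(A *v v) $ i = A $ i \<bullet> v"
  by (simp add: matrix_vector_mult_def inner_vec_def)

lemma sym_entry: "symmetric_matrix A \<Longrightarrow> A $ i $ j = A $ j $ i"
proof -
  assume "symmetric_matrix A"
  then have "transpose A $ i $ j = A $ i $ j" by (simp add: symmetric_matrix_def)
  then show ?thesis by (simp add: transpose_def)
qed

lemma psd_diag: "psd A \<Longrightarrow> 0 \<le> A $ i $ i"
  by (metis axis_dot_mv psd_def)

lemma quad_disc:
  fixes a b c :: real
  assumes "\<And>t. 0 \<le> a + 2*b*t + c*t^2" "0 \<le> c"
  shows "b^2 \<le> a * c"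
proof (cases "c = 0")
  case True
  show ?thesis
  proof (rule ccontr)
    assume "\<not> ?thesis"
    then have "b \<noteq> 0" using True by simp
    have "0 \<le> a + 2*b*(-(a+1)/(2*b)) + c*(-(a+1)/(2*b))^2" by (rule assms(1))
    also have "\<dots> = -1" using True \<open>b \<noteq> 0\<close> by (simp add: field_simps)
    finally show False by simp
  qed
next
  case False
  then have c: "c > 0" using assms(2) by simp
  have "0 \<le> a + 2*b*(-b/c) + c*(-b/c)^2" by (rule assms(1))
  also have "\<dots> = a - b^2/c" using c by (simp add: field_simps power2_eq_square)
  finally have "b^2/c \<le> a" by simp
  then show ?thesis using c by (simp add: field_simps mult.commute)
qed

lemma psd_offdiag:
  assumes s: "symmetric_matrix (A::real^'n^'n)" and p: "psd A"
  shows "(A $ i $ j)^2 \<le> A $ i $ i * A $ j $ j"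
proof -
  have "0 \<le> A$i$i + 2*(A$i$j)*t + A$j$j*t^2" for t
  proof -
    let ?w = "axis i 1 + t *\<^sub>R axis j (1::real)"
    have "0 \<le> ?w \<bullet> (A *v ?w)" using p psd_def by blast
    also have "\<dots> = A$i$i + t * A$i$j + t * A$j$i + t*t*A$j$j"
      by (simp add: matrix_vector_right_distrib matrix_vector_mult_scaleR inner_add_left
          inner_add_right axis_dot_mv algebra_simps)
    finally show ?thesis using sym_entry[OF s, of j i] by (simp add: power2_eq_square algebra_simps)
  qed
  from quad_disc[OF this psd_diag[OF p]] show ?thesis .
qed

lemma psd_trace_nonneg: "psd A \<Longrightarrow> 0 \<le> trace (A::real^'n^'n)"
  unfolding trace_def by (simp add: psd_diag sum_nonneg)

lemma psd_norm_le_trace: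
  assumes s: "symmetric_matrix (A::real^'n^'n)" and p: "psd A"
  shows "norm (A *v v) \<le> trace A * norm v"
proof -
  have row: "(A$i) \<bullet> (A$i) \<le> A$i$i * trace A" for i
  proof -
    have "(A$i) \<bullet> (A$i) = (\<Sum>j\<in>UNIV. (A$i$j)^2)" by (simp add: inner_vec_def power2_eq_square)
    also have "\<dots> \<le> (\<Sum>j\<in>UNIV. A$i$i * A$j$j)" by (rule sum_mono) (rule psd_offdiag[OF s p])
    also have "\<dots> = A$i$i * trace A" by (simp add: trace_def sum_distrib_left)
    finally show ?thesis .
  qed
  have "(A *v v) \<bullet> (A *v v) = (\<Sum>i\<in>UNIV. ((A$i) \<bullet> v)^2)"
    by (simp add: inner_vec_def mv_component power2_eq_square)
  also have "\<dots> \<le> (\<Sum>i\<in>UNIV. A$i$i * trace A * (v \<bullet> v))"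
  proof (rule sum_mono)
    fix i
    have "((A$i) \<bullet> v)^2 \<le> ((A$i) \<bullet> (A$i)) * (v \<bullet> v)"
      by (metis Cauchy_Schwarz_ineq)
    also have "\<dots> \<le> A$i$i * trace A * (v \<bullet> v)"
      by (rule mult_right_mono[OF row]) simp
    finally show "((A$i) \<bullet> v)^2 \<le> A$i$i * trace A * (v \<bullet> v)" .
  qed
  also have "\<dots> = (\<Sum>i\<in>UNIV. A$i$i) * (trace A * (v \<bullet> v))"
    by (simp add: sum_distrib_right mult.assoc)
  also have "\<dots> = trace A * (trace A * (v \<bullet> v))" by (simp add: trace_def)
  also have "\<dots> = (trace A * norm v)^2"
    by (simp add: power2_eq_square power2_norm_eq_inner[symmetric] algebra_simps)
  finally have sq: "(norm (A *v v))^2 \<le> (trace A * norm v)^2" by (simp add: power2_norm_eq_inner)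
  have "0 \<le> trace A * norm v" by (simp add: psd_trace_nonneg[OF p])
  from power2_le_imp_le[OF sq this] show ?thesis .
qed

lemma mat_norm_bound: "norm (A *v v) \<le> mat_norm A * norm v"
  unfolding mat_norm_def using onorm[OF matrix_vector_mul_bounded_linear] .

lemma mat_norm_nonneg: "0 \<le> mat_norm A"
  unfolding mat_norm_def by (simp add: onorm_pos_le matrix_vector_mul_bounded_linear)

lemma dot_le_mat_norm: "\<bar>u \<bullet> (A *v v)\<bar> \<le> mat_norm A * norm u * norm v"
proof -
  have "\<bar>u \<bullet> (A *v v)\<bar> \<le> norm u * norm (A *v v)" by (rule Cauchy_Schwarz_ineq2)
  also have "\<dots> \<le> norm u * (mat_norm A * norm v)" by (simp add: mat_norm_bound mult_left_mono)
  finally show ?thesis by (simp add: algebra_simps)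
qed

lemma diag_le_mat_norm: "\<bar>(A::real^'n^'n) $ i $ i\<bar> \<le> mat_norm A"
  using dot_le_mat_norm[of "axis i 1" A "axis i 1"] by (simp add: axis_dot_mv)

lemma trace_le_mat_norm: "\<bar>trace (A::real^'n^'n)\<bar> \<le> real CARD('n) * mat_norm A"
proof -
  have "\<bar>trace A\<bar> \<le> (\<Sum>i\<in>UNIV. \<bar>A$i$i\<bar>)" unfolding trace_def by (rule sum_abs)
  also have "\<dots> \<le> (\<Sum>i\<in>(UNIV::'n set). mat_norm A)" by (rule sum_mono) (rule diag_le_mat_norm)
  finally show ?thesis by simp
qed



definition penrose :: "real^'n^'m \<Rightarrow> real^'m^'n \<Rightarrow> bool" where
 "penrose A X \<longleftrightarrow> A ** X ** A = A \<and> X ** A ** X = X \<and>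
     transpose (A ** X) = A ** X \<and> transpose (X ** A) = X ** A"

lemma penrose_unique:
  assumes "penrose A X" "penrose A Y" shows "X = Y"
proof -
  have a1: "A ** X ** A = A" and a2: "X ** A ** X = X" and a3: "transpose (A ** X) = A ** X"
    and a4: "transpose (X ** A) = X ** A"
    and b1: "A ** Y ** A = A" and b2: "Y ** A ** Y = Y" and b3: "transpose (A ** Y) = A ** Y"
    and b4: "transpose (Y ** A) = Y ** A"
    using assms unfolding penrose_def by auto
  have tA1: "transpose A = transpose A ** transpose (A ** Y)"
  proof -
    have "transpose A ** transpose (A ** Y) = transpose (A ** Y ** A)"
      by (simp add: matrix_transpose_mul matrix_mul_assoc)
    then show ?thesis using b1 by simp
  qed
  have tA2: "transpose A = transpose (X ** A) ** transpose A"
  proof -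
    have "transpose (X ** A) ** transpose A = transpose (A ** X ** A)"
      by (simp add: matrix_transpose_mul matrix_mul_assoc)
    then show ?thesis using a1 by simp
  qed
  have "X = X ** (A ** X)" using a2 by (simp add: matrix_mul_assoc)
  also have "\<dots> = X ** transpose (A ** X)" using a3 by simp
  also have "\<dots> = X ** (transpose X ** transpose A)" by (simp add: matrix_transpose_mul)
  also have "\<dots> = X ** (transpose X ** (transpose A ** transpose (A ** Y)))" using tA1 by simp
  also have "\<dots> = X ** transpose (A ** X) ** transpose (A ** Y)"
    by (simp add: matrix_transpose_mul matrix_mul_assoc)
  also have "\<dots> = X ** (A ** X) ** (A ** Y)" using a3 b3 by simp
  also have "\<dots> = (X ** A ** X) ** A ** Y" by (simp add: matrix_mul_assoc)
  also have "\<dots> = X ** A ** Y" using a2 by simp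
  finally have X: "X = X ** A ** Y" .
  have "Y = (Y ** A) ** Y" using b2 by simp
  also have "\<dots> = transpose (Y ** A) ** Y" using b4 by simp
  also have "\<dots> = transpose A ** transpose Y ** Y" by (simp add: matrix_transpose_mul)
  also have "\<dots> = transpose (X ** A) ** transpose A ** transpose Y ** Y" using tA2 by simp
  also have "\<dots> = transpose (X ** A) ** transpose (Y ** A) ** Y"
    by (simp add: matrix_transpose_mul matrix_mul_assoc)
  also have "\<dots> = (X ** A) ** (Y ** A) ** Y" using a4 b4 by simp
  also have "\<dots> = X ** A ** (Y ** A ** Y)" by (simp add: matrix_mul_assoc)
  also have "\<dots> = X ** A ** Y" using b2 by simp
  finally show ?thesis using X by simp
qed

lemma transpose_eq_by_dots:
  fixes M :: "real^'n^'n"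
  assumes "\<And>u v. u \<bullet> (M *v v) = (M *v u) \<bullet> v"
  shows "transpose M = M"
proof -
  have "transpose M *v u = M *v u" for u
  proof -
    let ?w = "transpose M *v u - M *v u"
    have "?w \<bullet> ?w = (transpose M *v u) \<bullet> ?w - (M *v u) \<bullet> ?w" by (simp add: inner_diff_left)
    also have "(transpose M *v u) \<bullet> ?w = u \<bullet> (M *v ?w)" by (simp add: dot_mv_transpose)
    also have "\<dots> = (M *v u) \<bullet> ?w" by (rule assms)
    finally show ?thesis by simp
  qed
  then show ?thesis by (simp add: matrix_eq)
qed

lemma penrose_exists_sym:
  fixes S :: "real^'n^'n"
  assumes s: "symmetric_matrix S"
  shows "\<exists>X. penrose S X"
proof -
  define f where "f = (\<lambda>v. S *v v)"
  define V where "V = range f"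
  have lf: "linear f" unfolding f_def by (rule matrix_vector_mul_linear)
  have sV: "subspace V" unfolding V_def by (rule linear_subspace_image[OF lf subspace_UNIV])
  have z: "S *v w = 0" if "S *v (S *v w) = 0" for w
  proof -
    have "(S *v w) \<bullet> (S *v w) = w \<bullet> (S *v (S *v w))" by (rule sym_dot[OF s])
    then show ?thesis using that by simp
  qed
  have inj: "inj_on f V"
  proof (rule inj_onI)
    fix x y assume "x \<in> V" "y \<in> V" "f x = f y"
    then obtain a b where ab: "x = S *v a" "y = S *v b" unfolding V_def f_def by auto
    have "S *v (S *v (a - b)) = 0" using \<open>f x = f y\<close> ab
      by (simp add: f_def matrix_vector_mult_diff_distrib)
    then have "S *v (a - b) = 0" by (rule z)
    then show "x = y" using ab by (simp add: matrix_vector_mult_diff_distrib)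
  qed
  have spanV: "span V = V" using sV by (simp add: span_eq_iff)
  have "f ` V = V"
  proof (rule subspace_dim_equal)
    show "subspace (f ` V)" by (rule linear_subspace_image[OF lf sV])
    show "subspace V" by (rule sV)
    show "f ` V \<subseteq> V" unfolding V_def by auto
    show "dim V \<le> dim (f ` V)" using dim_image_eq[OF lf, of V] inj spanV by simp
  qed
  then have surj: "\<exists>c\<in>V. S *v c = w" if "w \<in> V" for w using that unfolding f_def by force
  obtain g where g: "range g \<subseteq> V" "linear g" "\<forall>v\<in>V. g (f v) = v"
    using real_vector.linear_exists_left_inverse_on[OF lf sV inj] by blast
  have Sg: "S *v g w = w" if wV: "w \<in> V" for w
  proof -
    obtain c where "c \<in> V" "S *v c = w" using surj[OF wV] by blast
    then show ?thesis using g(3) unfolding f_def by auto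
  qed
  define P where "P v = g (S *v v)" for v
  have PV: "P v \<in> V" for v using g(1) unfolding P_def by auto
  have SV: "S *v v \<in> V" for v unfolding V_def f_def by auto
  have SP: "S *v P v = S *v v" for v unfolding P_def using Sg[OF SV] .
  have gS: "g (S *v w) = w" if "w \<in> V" for w using g(3) that unfolding f_def by auto
  have Psym: "u \<bullet> P v = P u \<bullet> v" for u v
  proof -
    have orth: "(a - P a) \<bullet> P b = 0" for a b
    proof -
      obtain c where c: "S *v c = P b" using surj[OF PV] by blast
      have "(a - P a) \<bullet> (S *v c) = c \<bullet> (S *v (a - P a))" by (rule sym_dot[OF s])
      also have "\<dots> = 0" by (simp add: matrix_vector_mult_diff_distrib SP)
      finally show ?thesis using c by simp
    qed
    have "u \<bullet> P v = P u \<bullet> P v" using orth[of u v] by (simp add: inner_diff_left)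
    moreover have "P u \<bullet> v = P u \<bullet> P v"
    proof -
      have "(v - P v) \<bullet> P u = 0" by (rule orth)
      then have "v \<bullet> P u - P v \<bullet> P u = 0" by (simp only: inner_diff_left)
      then show ?thesis using inner_commute[of "P u" v] inner_commute[of "P u" "P v"] by linarith
    qed
    ultimately show ?thesis by simp
  qed
  define X where "X = matrix (\<lambda>v. g (g (S *v v)))"
  have lX: "linear (\<lambda>v. g (g (S *v v)))"
    using linear_compose[OF linear_compose[OF matrix_vector_mul_linear g(2)] g(2)] by (simp add: o_def)
  have Xv: "X *v v = g (P v)" for v unfolding X_def P_def using matrix_vector_mul(2)[OF lX] by metis
  have XS: "X *v (S *v v) = P v" for v
    using Xv[of "S *v v"] unfolding P_def using gS[OF SV] by simp
  have SX: "S *v (X *v v) = P v" for v using Xv Sg[OF PV] by simp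
  have e1: "S ** X ** S = S"
    by (simp add: matrix_eq matrix_vector_mul_assoc[symmetric] XS SP)
  have e2: "X ** S ** X = X"
  proof -
    have "X *v (S *v (X *v v)) = X *v v" for v
    proof -
      have "X *v (S *v (X *v v)) = P (X *v v)" by (rule XS)
      also have "\<dots> = g (S *v (X *v v))" by (simp add: P_def)
      also have "\<dots> = g (P v)" by (simp add: SX)
      also have "\<dots> = X *v v" by (simp add: Xv)
      finally show ?thesis .
    qed
    then show ?thesis by (simp add: matrix_eq matrix_vector_mul_assoc[symmetric])
  qed
  have e3: "transpose (S ** X) = S ** X"
    by (rule transpose_eq_by_dots) (simp add: matrix_vector_mul_assoc[symmetric] SX Psym)
  have e4: "transpose (X ** S) = X ** S"
    by (rule transpose_eq_by_dots) (simp add: matrix_vector_mul_assoc[symmetric] XS Psym)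
  show ?thesis unfolding penrose_def using e1 e2 e3 e4 by blast
qed

lemma pinv_penrose_sym:
  fixes S :: "real^'n^'n"
  assumes s: "symmetric_matrix S"
  shows "penrose S (pinv S)" "symmetric_matrix (pinv S)"
proof -
  obtain X where X: "penrose S X" using penrose_exists_sym[OF s] by blast
  have ex1: "\<exists>!X. penrose S X" using X penrose_unique by blast
  have "pinv S = (THE X. penrose S X)" unfolding pinv_def penrose_def by simp
  then show P: "penrose S (pinv S)" using theI'[OF ex1] by simp
  have tS: "transpose S = S" using s symmetric_matrix_def by auto
  define Z where "Z = pinv S"
  have p1: "S ** Z ** S = S" and p2: "Z ** S ** Z = Z" and p3: "transpose (S ** Z) = S ** Z"
    and p4: "transpose (Z ** S) = Z ** S" using P unfolding penrose_def Z_def by auto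
  have q1: "S ** transpose Z ** S = S"
  proof -
    have "S ** transpose Z ** S = transpose (S ** Z ** S)" by (simp add: matrix_transpose_mul tS matrix_mul_assoc)
    then show ?thesis using p1 tS by simp
  qed
  have q2: "transpose Z ** S ** transpose Z = transpose Z"
  proof -
    have "transpose Z ** S ** transpose Z = transpose (Z ** S ** Z)" by (simp add: matrix_transpose_mul tS matrix_mul_assoc)
    then show ?thesis using p2 by simp
  qed
  have q3: "S ** transpose Z = Z ** S"
  proof -
    have "S ** transpose Z = transpose (Z ** S)" by (simp add: matrix_transpose_mul tS)
    then show ?thesis using p4 by simp
  qed
  have q4: "transpose Z ** S = S ** Z"
  proof -
    have "transpose Z ** S = transpose (S ** Z)" by (simp add: matrix_transpose_mul tS)
    then show ?thesis using p3 by simp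
  qed
  have "penrose S (transpose (pinv S))"
    unfolding penrose_def Z_def[symmetric] using q1 q2 q3 q4 p3 p4 by simp
  then show "symmetric_matrix (pinv S)" unfolding symmetric_matrix_def
    using P penrose_unique by blast
qed



lemma greedy_sel:
  fixes R :: "real^'d^'d" and \<sigma> :: "'k::finite \<Rightarrow> 'd"
  assumes inj: "inj \<sigma>" and gr: "\<And>i j. i \<notin> range \<sigma> \<Longrightarrow> R$i$i \<le> R$(\<sigma> j)$(\<sigma> j)"
  shows "real CARD('k) * trace R \<le> real CARD('d) * (\<Sum>j\<in>UNIV. R$(\<sigma> j)$(\<sigma> j))"
proof -
  define sel where "sel = (\<Sum>j\<in>UNIV. R$(\<sigma> j)$(\<sigma> j))"
  define m where "m = Min ((\<lambda>j. R$(\<sigma> j)$(\<sigma> j)) ` UNIV)"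
  have mle: "m \<le> R$(\<sigma> j)$(\<sigma> j)" for j unfolding m_def by (rule Min_le) auto
  have ksel: "real CARD('k) * m \<le> sel"
  proof -
    have "(\<Sum>j\<in>(UNIV::'k set). m) \<le> sel" unfolding sel_def by (rule sum_mono) (rule mle)
    then show ?thesis by simp
  qed
  have mex: "\<exists>j. m = R$(\<sigma> j)$(\<sigma> j)"
  proof -
    have "m \<in> (\<lambda>j. R$(\<sigma> j)$(\<sigma> j)) ` UNIV" unfolding m_def by (rule Min_in) auto
    then show ?thesis by auto
  qed
  have out: "R$i$i \<le> m" if "i \<notin> range \<sigma>" for i using mex gr[OF that] by auto
  have cr: "card (range \<sigma>) = CARD('k)" using card_image[OF inj_on_subset[OF inj]] by simp
  have cc: "card (- range \<sigma>) = CARD('d) - CARD('k)"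
    using card_Diff_subset[of "range \<sigma>" UNIV] cr by (simp add: Compl_eq_Diff_UNIV)
  have kd: "CARD('k) \<le> CARD('d)" using cr card_mono[of "UNIV::'d set" "range \<sigma>"] by simp
  have split: "trace R = (\<Sum>i\<in>range \<sigma>. R$i$i) + (\<Sum>i\<in>- range \<sigma>. R$i$i)"
  proof -
    have "trace R = (\<Sum>i\<in>range \<sigma> \<union> - range \<sigma>. R$i$i)" by (simp only: trace_def Compl_partition)
    also have "\<dots> = (\<Sum>i\<in>range \<sigma>. R$i$i) + (\<Sum>i\<in>- range \<sigma>. R$i$i)"
      by (rule sum.union_disjoint) auto
    finally show ?thesis .
  qed
  have s1: "(\<Sum>i\<in>range \<sigma>. R$i$i) = sel"
    unfolding sel_def using sum.reindex[OF inj_on_subset[OF inj], of UNIV "\<lambda>i. R$i$i"] by simp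
  have s2: "(\<Sum>i\<in>- range \<sigma>. R$i$i) \<le> real (CARD('d) - CARD('k)) * m"
  proof -
    have "(\<Sum>i\<in>- range \<sigma>. R$i$i) \<le> (\<Sum>i\<in>- range \<sigma>. m)" by (rule sum_mono) (simp add: out)
    then show ?thesis using cc by simp
  qed
  have dk: "real (CARD('d) - CARD('k)) = real CARD('d) - real CARD('k)" using kd by simp
  have "real CARD('k) * trace R \<le> real CARD('k) * sel + real CARD('k) * ((real CARD('d) - real CARD('k)) * m)"
    using split s1 s2 dk by (simp add: distrib_left mult_left_mono)
  also have "real CARD('k) * ((real CARD('d) - real CARD('k)) * m) = (real CARD('d) - real CARD('k)) * (real CARD('k) * m)"
    by simp
  also have "\<dots> \<le> (real CARD('d) - real CARD('k)) * sel" using ksel kd by (intro mult_left_mono) auto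
  finally show ?thesis unfolding sel_def by (simp add: algebra_simps)
qed

lemma sym_diff: "symmetric_matrix A \<Longrightarrow> symmetric_matrix B \<Longrightarrow> symmetric_matrix (A - B)"
  unfolding symmetric_matrix_def by (simp add: transpose_def vec_eq_iff)

lemma psd_diff_iff: "loewner_le A G \<longleftrightarrow> psd (G - A)" by (simp add: loewner_le_def)

lemma trace_nonneg_sum_dots: "trace (A::real^'n^'n) = (\<Sum>i\<in>UNIV. axis i 1 \<bullet> (A *v axis i 1))"
  by (rule trace_as_dots)

lemma dot_tr: "x \<bullet> (transpose (A::real^_^_) *v y) = (A *v x) \<bullet> y"
  using dot_mv_transpose[of x "transpose A" y] by (simp only: transpose_transpose)

lemma dot_sym: "transpose (A::real^'n^'n) = A \<Longrightarrow> x \<bullet> (A *v y) = (A *v x) \<bullet> y"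
  using dot_mv_transpose[of x A y] by simp

lemma mv3: "A ** B ** C = (D::real^'n^'n) \<Longrightarrow> A *v (B *v (C *v w)) = D *v w"
  by (simp add: matrix_vector_mul_assoc matrix_mul_assoc)

lemma SRk_props:
  fixes G A :: "real^'d^'d" and U :: "real^'k::finite^'d"
  assumes sG: "symmetric_matrix G" and sA: "symmetric_matrix A" and le: "loewner_le A G"
    and E: "is_Ek (G - A) U"
  shows "symmetric_matrix (SRk G A U) \<and> loewner_le A (SRk G A U) \<and>
     trace (SRk G A U - A) \<le> (1 - real CARD('k) / real CARD('d)) * trace (G - A)"
proof -
  define R where "R = G - A"
  have sR: "symmetric_matrix R" unfolding R_def by (rule sym_diff[OF sG sA])
  have tR: "transpose R = R" using sR symmetric_matrix_def by auto
  have pR: "psd R" using le unfolding R_def loewner_le_def .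
  obtain \<sigma> :: "'k \<Rightarrow> 'd" where inj: "inj \<sigma>"
    and gr: "\<And>i j. i \<notin> range \<sigma> \<Longrightarrow> R$i$i \<le> R$(\<sigma> j)$(\<sigma> j)"
    and Ud: "U = (\<chi> r c. if r = \<sigma> c then 1 else 0)"
    using E unfolding is_Ek_def R_def by blast
  define sel where "sel = (\<Sum>j\<in>UNIV. R$(\<sigma> j)$(\<sigma> j))"
  have greedy: "real CARD('k) * trace R \<le> real CARD('d) * sel"
    unfolding sel_def by (rule greedy_sel[OF inj gr])
  have Uax: "U *v axis j 1 = axis (\<sigma> j) 1" for j
    unfolding Ud matrix_vector_mult_basis by (simp add: column_def axis_def vec_eq_iff)
  have trR: "0 \<le> trace R" by (rule psd_trace_nonneg[OF pR])
  have cardpos: "0 < real CARD('d)" by simp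
  have final: "trace R - sel \<le> (1 - real CARD('k) / real CARD('d)) * trace R"
  proof -
    have "real CARD('k) / real CARD('d) * trace R \<le> sel"
      using greedy cardpos by (simp add: field_simps)
    then show ?thesis by (simp add: algebra_simps)
  qed
  have diagR: "R$(\<sigma> j)$(\<sigma> j) = axis (\<sigma> j) 1 \<bullet> (R *v (U *v axis j 1))" for j
    by (simp add: Uax axis_dot_mv)
  show ?thesis
  proof (cases "G ** U = A ** U")
    case True
    have "(R ** U) *v x = (G ** U) *v x - (A ** U) *v x" for x
      by (simp add: R_def matrix_vector_mul_assoc[symmetric] matrix_vector_mult_diff_rdistrib)
    then have "(R ** U) *v x = 0 *v x" for x using True by simp
    then have RU: "R ** U = 0" by (simp add: matrix_eq)
    have "sel = 0" unfolding sel_def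
      by (simp add: diagR matrix_vector_mul_assoc RU)
    then show ?thesis using True sG final le by (simp add: SRk_def R_def[symmetric])
  next
    case False
    define S where "S = transpose U ** R ** U"
    have tS: "transpose S = S" unfolding S_def by (simp add: matrix_transpose_mul tR matrix_mul_assoc)
    have sS: "symmetric_matrix S" using tS symmetric_matrix_def by auto
    define X where "X = pinv S"
    have pen: "penrose S X" and sX: "symmetric_matrix X"
      unfolding X_def using pinv_penrose_sym[OF sS] by auto
    have SXS: "S ** X ** S = S" and XSX: "X ** S ** X = X" using pen penrose_def by auto
    have tX: "transpose X = X" using sX symmetric_matrix_def by auto
    have Sv: "S *v w = transpose U *v (R *v (U *v w))" for w
      unfolding S_def by (simp only: matrix_vector_mul_assoc[symmetric])
    have Sdot: "w \<bullet> (S *v w) = (U *v w) \<bullet> (R *v (U *v w))" for w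
      by (simp only: Sv dot_tr)
    have Spsd: "0 \<le> w \<bullet> (S *v w)" for w using Sdot pR psd_def by metis
    have XSXv: "X *v (S *v (X *v w)) = X *v w" for w by (rule mv3[OF XSX])
    have Xpsd: "0 \<le> w \<bullet> (X *v w)" for w
    proof -
      have "w \<bullet> (X *v w) = w \<bullet> (X *v (S *v (X *v w)))" by (simp only: XSXv)
      also have "\<dots> = (X *v w) \<bullet> (S *v (X *v w))" by (rule dot_sym[OF tX])
      finally show ?thesis using Spsd by simp
    qed
    define N where "N = R ** U ** X ** transpose U ** R"
    have SR: "SRk G A U = G - N" using False unfolding SRk_def N_def X_def S_def R_def by simp
    have SRA: "SRk G A U - A = R - N" unfolding SR R_def by simp
    have Nv: "N *v v = R *v (U *v (X *v (transpose U *v (R *v v))))" for v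
      unfolding N_def by (simp only: matrix_vector_mul_assoc[symmetric])
    have tN: "transpose N = N" unfolding N_def
      by (simp add: matrix_transpose_mul tR tX matrix_mul_assoc)
    have Ndot: "v \<bullet> (N *v v) = (transpose U *v (R *v v)) \<bullet> (X *v (transpose U *v (R *v v)))" for v
    proof -
      have "v \<bullet> (N *v v) = v \<bullet> (R *v (U *v (X *v (transpose U *v (R *v v)))))" by (simp only: Nv)
      also have "\<dots> = (R *v v) \<bullet> (U *v (X *v (transpose U *v (R *v v))))" by (rule dot_sym[OF tR])
      also have "\<dots> = (transpose U *v (R *v v)) \<bullet> (X *v (transpose U *v (R *v v)))"
        by (rule dot_mv_transpose)
      finally show ?thesis .
    qed
    have psdRN: "psd (R - N)"
      unfolding psd_def
    proof
      fix v
      define y where "y = transpose U *v (R *v v)"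
      define w where "w = X *v y"
      have "0 \<le> (v - U *v w) \<bullet> (R *v (v - U *v w))" using pR psd_def by blast
      also have "\<dots> = v \<bullet> (R *v v) - 2 * ((U *v w) \<bullet> (R *v v)) + (U *v w) \<bullet> (R *v (U *v w))"
        using sym_dot[OF sR, of v "U *v w"]
        by (simp add: matrix_vector_mult_diff_distrib inner_diff_left inner_diff_right)
      also have "(U *v w) \<bullet> (R *v v) = y \<bullet> (X *v y)"
      proof -
        have "(U *v w) \<bullet> (R *v v) = w \<bullet> y" unfolding y_def by (rule dot_tr[symmetric])
        then show ?thesis unfolding w_def by (simp add: inner_commute)
      qed
      also have "(U *v w) \<bullet> (R *v (U *v w)) = y \<bullet> (X *v y)"
      proof -
        have "(U *v w) \<bullet> (R *v (U *v w)) = w \<bullet> (S *v w)" by (simp only: Sdot)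
        also have "\<dots> = y \<bullet> (X *v (S *v (X *v y)))" unfolding w_def by (rule dot_sym[OF tX, symmetric])
        also have "\<dots> = y \<bullet> (X *v y)" by (simp only: XSXv)
        finally show ?thesis .
      qed
      finally have "y \<bullet> (X *v y) \<le> v \<bullet> (R *v v)" by simp
      then show "0 \<le> v \<bullet> ((R - N) *v v)"
        by (simp only: matrix_vector_mult_diff_rdistrib inner_diff_right Ndot y_def[symmetric])
    qed
    have trN: "sel \<le> trace N"
    proof -
      define y where "y i = transpose U *v (R *v axis i 1)" for i
      have yX: "0 \<le> y i \<bullet> (X *v y i)" for i by (rule Xpsd)
      have "trace N = (\<Sum>i\<in>UNIV. y i \<bullet> (X *v y i))"
        by (simp only: trace_as_dots Ndot y_def)
      moreover have "sel = (\<Sum>j\<in>UNIV. y (\<sigma> j) \<bullet> (X *v y (\<sigma> j)))"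
      proof -
        have Sj: "S *v axis j 1 = y (\<sigma> j)" for j by (simp only: Sv Uax y_def)
        have "sel = trace S"
          by (simp only: sel_def trace_as_dots Sdot Uax axis_dot_mv)
        also have "\<dots> = trace (S ** X ** S)" using SXS by simp
        also have "\<dots> = (\<Sum>j\<in>UNIV. (S *v axis j 1) \<bullet> (X *v (S *v axis j 1)))"
          by (simp only: trace_as_dots matrix_vector_mul_assoc[symmetric] dot_sym[OF tS])
        finally show ?thesis by (simp only: Sj)
      qed
      moreover have "(\<Sum>j\<in>UNIV. y (\<sigma> j) \<bullet> (X *v y (\<sigma> j))) = (\<Sum>i\<in>range \<sigma>. y i \<bullet> (X *v y i))"
        using sum.reindex[OF inj_on_subset[OF inj], of UNIV "\<lambda>i. y i \<bullet> (X *v y i)"] by simp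
      moreover have "(\<Sum>i\<in>range \<sigma>. y i \<bullet> (X *v y i)) \<le> (\<Sum>i\<in>UNIV. y i \<bullet> (X *v y i))"
        by (rule sum_mono2) (auto simp: yX)
      ultimately show ?thesis by simp
    qed
    have symRN: "symmetric_matrix (G - N)"
      using sG tN unfolding symmetric_matrix_def by (simp add: transpose_def vec_eq_iff)
    have tr: "trace (SRk G A U - A) \<le> trace R - sel" using trN by (simp add: SRA trace_sub)
    show ?thesis
    proof (intro conjI)
      show "symmetric_matrix (SRk G A U)" using SR symRN by simp
      show "loewner_le A (SRk G A U)" unfolding loewner_le_def SRA by (rule psdRN)
      show "trace (SRk G A U - A) \<le> (1 - real CARD('k) / real CARD('d)) * trace (G - A)"
        using tr final unfolding R_def by linarith
    qed
  qed
qed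



lemma onorm_diff_mat:
  "onorm ((\<lambda>k. (A::real^'n^'n) *v k) - (\<lambda>k. B *v k)) = mat_norm (A - B)"
proof -
  have "((\<lambda>k. A *v k) - (\<lambda>k. B *v k)) = (\<lambda>k. (A - B) *v k)"
    by (rule ext) (simp add: matrix_vector_mult_diff_rdistrib)
  then show ?thesis by (simp add: mat_norm_def)
qed

lemma lin_bound:
  fixes g :: "real^'d \<Rightarrow> real^'d" and H :: "real^'d \<Rightarrow> real^'d^'d"
  assumes gd: "\<And>y. (g has_derivative (\<lambda>k. H y *v k)) (at y)"
    and lip: "\<And>y z. mat_norm (H y - H z) \<le> Lt * norm (y - z)" and Lt: "0 \<le> Lt"
    and seg: "\<And>t. t \<in> {0..1} \<Longrightarrow> norm (a + t *\<^sub>R (b - a) - x0) \<le> r"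
    and r: "0 \<le> r"
  shows "norm (g b - g a - H x0 *v (b - a)) \<le> norm (b - a) * (Lt * r)"
proof -
  let ?S = "cball x0 r"
  have S: "a + t *\<^sub>R (b - a) \<in> ?S" if "t \<in> {0..1}" for t
    using seg[OF that] by (simp add: dist_norm norm_minus_commute)
  have d: "(g has_derivative (\<lambda>k. H y *v k)) (at y within ?S)" if "y \<in> ?S" for y
    by (rule has_derivative_at_withinI[OF gd])
  have B: "onorm ((\<lambda>k. H y *v k) - (\<lambda>k. H x0 *v k)) \<le> Lt * r" if "y \<in> ?S" for y
  proof -
    have "onorm ((\<lambda>k. H y *v k) - (\<lambda>k. H x0 *v k)) = mat_norm (H y - H x0)" by (rule onorm_diff_mat)
    also have "\<dots> \<le> Lt * norm (y - x0)" by (rule lip)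
    also have "\<dots> \<le> Lt * r" using that Lt by (intro mult_left_mono) (auto simp: dist_norm norm_minus_commute)
    finally show ?thesis .
  qed
  have x0: "x0 \<in> ?S" using r by simp
  show ?thesis
    using differentiable_bound_linearization[where f = g and f' = "\<lambda>y k. H y *v k", OF S d B x0] by simp
qed

lemma second_diff:
  fixes f :: "real^'d \<Rightarrow> real" and g :: "real^'d \<Rightarrow> real^'d" and H :: "real^'d \<Rightarrow> real^'d^'d"
  assumes fd: "\<And>y. (f has_derivative (\<lambda>k. g y \<bullet> k)) (at y)"
    and gd: "\<And>y. (g has_derivative (\<lambda>k. H y *v k)) (at y)"
    and lip: "\<And>y z. mat_norm (H y - H z) \<le> Lt * norm (y - z)" and Lt: "0 \<le> Lt"
    and h: "0 < h"
  shows "\<bar>f (x + h *\<^sub>R u + h *\<^sub>R v) - f (x + h *\<^sub>R u) - f (x + h *\<^sub>R v) + f x - h^2 * (u \<bullet> (H x *v v))\<bar>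
     \<le> h^3 * (Lt * (norm u + norm v) * norm u * norm v)"
proof -
  define \<phi> where "\<phi> s = f (x + s *\<^sub>R u + h *\<^sub>R v) - f (x + s *\<^sub>R u)" for s
  define \<phi>' where "\<phi>' s = g (x + s *\<^sub>R u + h *\<^sub>R v) \<bullet> u - g (x + s *\<^sub>R u) \<bullet> u" for s
  have line: "((\<lambda>s. f (p + s *\<^sub>R u)) has_real_derivative (g (p + s *\<^sub>R u) \<bullet> u)) (at s)" for p s
  proof -
    have l: "((\<lambda>s. p + s *\<^sub>R u) has_derivative (\<lambda>t. t *\<^sub>R u)) (at s)"
      by (intro derivative_eq_intros) auto
    have "((\<lambda>s. f (p + s *\<^sub>R u)) has_derivative (\<lambda>t. g (p + s *\<^sub>R u) \<bullet> (t *\<^sub>R u))) (at s)"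
      using has_derivative_compose[OF l fd] by simp
    moreover have "(\<lambda>t. g (p + s *\<^sub>R u) \<bullet> (t *\<^sub>R u)) = (*) (g (p + s *\<^sub>R u) \<bullet> u)"
      by (rule ext) (simp add: mult.commute)
    ultimately show ?thesis unfolding has_field_derivative_def by simp
  qed
  have dphi: "(\<phi> has_real_derivative \<phi>' s) (at s)" for s
  proof -
    have e: "\<phi> = (\<lambda>s. f ((x + h *\<^sub>R v) + s *\<^sub>R u) - f (x + s *\<^sub>R u))"
      by (rule ext) (simp add: \<phi>_def algebra_simps)
    show ?thesis unfolding e \<phi>'_def
      using DERIV_diff[OF line[of "x + h *\<^sub>R v" s] line[of x s]] by (simp add: algebra_simps)
  qed
  obtain \<xi> where \<xi>: "0 < \<xi>" "\<xi> < h" "\<phi> h - \<phi> 0 = (h - 0) * \<phi>' \<xi>"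
    using MVT2[OF h, of \<phi> \<phi>'] dphi by blast
  define a where "a = x + \<xi> *\<^sub>R u"
  define b where "b = a + h *\<^sub>R v"
  define r where "r = h * (norm u + norm v)"
  have r: "0 \<le> r" using h by (simp add: r_def)
  have seg: "norm (a + t *\<^sub>R (b - a) - x) \<le> r" if "t \<in> {0..1}" for t
  proof -
    have "a + t *\<^sub>R (b - a) - x = \<xi> *\<^sub>R u + (t * h) *\<^sub>R v" by (simp add: a_def b_def)
    moreover have "norm (\<xi> *\<^sub>R u + (t * h) *\<^sub>R v) \<le> norm (\<xi> *\<^sub>R u) + norm ((t * h) *\<^sub>R v)"
      by (rule norm_triangle_ineq)
    moreover have "norm (\<xi> *\<^sub>R u) + norm ((t * h) *\<^sub>R v) = \<xi> * norm u + (t * h) * norm v"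
      using \<xi> that h by simp
    ultimately have "norm (a + t *\<^sub>R (b - a) - x) \<le> \<xi> * norm u + (t * h) * norm v" by simp
    also have "\<dots> \<le> h * norm u + h * norm v"
      using \<xi> that h by (intro add_mono mult_right_mono) (auto simp: mult_le_cancel_right1)
    finally show ?thesis by (simp add: r_def algebra_simps)
  qed
  have lb: "norm (g b - g a - H x *v (b - a)) \<le> norm (b - a) * (Lt * r)"
    by (rule lin_bound[OF gd lip Lt seg r])
  have ba: "b - a = h *\<^sub>R v" by (simp add: b_def)
  have p': "\<phi>' \<xi> = u \<bullet> (g b - g a)" by (simp add: \<phi>'_def a_def b_def inner_diff_right inner_commute)
  have "\<bar>\<phi>' \<xi> - h * (u \<bullet> (H x *v v))\<bar> = \<bar>u \<bullet> (g b - g a - H x *v (b - a))\<bar>"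
    by (simp add: p' ba inner_diff_right matrix_vector_mult_scaleR)
  also have "\<dots> \<le> norm u * norm (g b - g a - H x *v (b - a))" by (rule Cauchy_Schwarz_ineq2)
  also have "\<dots> \<le> norm u * (norm (b - a) * (Lt * r))" by (rule mult_left_mono[OF lb]) simp
  also have "\<dots> = h^2 * (Lt * (norm u + norm v) * norm u * norm v)"
    using h by (simp add: ba r_def power2_eq_square algebra_simps)
  finally have bd: "\<bar>\<phi>' \<xi> - h * (u \<bullet> (H x *v v))\<bar> \<le> h^2 * (Lt * (norm u + norm v) * norm u * norm v)" .
  have "f (x + h *\<^sub>R u + h *\<^sub>R v) - f (x + h *\<^sub>R u) - f (x + h *\<^sub>R v) + f x - h^2 * (u \<bullet> (H x *v v))
      = h * (\<phi>' \<xi> - h * (u \<bullet> (H x *v v)))"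
    using \<xi>(3) by (simp add: \<phi>_def power2_eq_square algebra_simps)
  then have "\<bar>f (x + h *\<^sub>R u + h *\<^sub>R v) - f (x + h *\<^sub>R u) - f (x + h *\<^sub>R v) + f x - h^2 * (u \<bullet> (H x *v v))\<bar>
      = h * \<bar>\<phi>' \<xi> - h * (u \<bullet> (H x *v v))\<bar>" using h by (simp add: abs_mult)
  also have "\<dots> \<le> h * (h^2 * (Lt * (norm u + norm v) * norm u * norm v))"
    using bd h by (intro mult_left_mono) auto
  finally show ?thesis by (simp add: power3_eq_cube power2_eq_square algebra_simps)
qed

lemma small_forall_zero:
  fixes a c :: real
  assumes "\<And>h. 0 < h \<Longrightarrow> \<bar>a\<bar> \<le> h * c" "0 \<le> c"
  shows "a = 0"
proof (rule ccontr)
  assume "a \<noteq> 0"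
  then have pa: "0 < \<bar>a\<bar>" by simp
  have "\<bar>a\<bar> \<le> (\<bar>a\<bar> / (2 * (c + 1))) * c" using assms(1)[of "\<bar>a\<bar> / (2 * (c + 1))"] pa assms(2) by simp
  also have "\<dots> = \<bar>a\<bar> * (c / (2 * (c + 1)))" by simp
  also have "\<dots> < \<bar>a\<bar> * 1"
  proof (rule mult_strict_left_mono[OF _ pa])
    show "c / (2 * (c + 1)) < 1" using assms(2) by (simp add: field_simps)
  qed
  also have "\<dots> = \<bar>a\<bar>" by simp
  finally show False by simp
qed

lemma hess_sym:
  fixes f :: "real^'d \<Rightarrow> real" and g :: "real^'d \<Rightarrow> real^'d" and H :: "real^'d \<Rightarrow> real^'d^'d"
  assumes fd: "\<And>y. (f has_derivative (\<lambda>k. g y \<bullet> k)) (at y)"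
    and gd: "\<And>y. (g has_derivative (\<lambda>k. H y *v k)) (at y)"
    and lip: "\<And>y z. mat_norm (H y - H z) \<le> Lt * norm (y - z)" and Lt: "0 \<le> Lt"
  shows "symmetric_matrix (H x)"
proof -
  have uv: "u \<bullet> (H x *v v) = v \<bullet> (H x *v u)" for u v
  proof -
    define C where "C = Lt * (norm u + norm v) * norm u * norm v"
    have C: "0 \<le> C" using Lt by (simp add: C_def)
    have "\<bar>u \<bullet> (H x *v v) - v \<bullet> (H x *v u)\<bar> \<le> h * (2 * C)" if h: "0 < h" for h
    proof -
      define D where "D = f (x + h *\<^sub>R u + h *\<^sub>R v) - f (x + h *\<^sub>R u) - f (x + h *\<^sub>R v) + f x"
      have D2: "D = f (x + h *\<^sub>R v + h *\<^sub>R u) - f (x + h *\<^sub>R v) - f (x + h *\<^sub>R u) + f x"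
        unfolding D_def by (simp add: algebra_simps)
      have 1: "\<bar>D - h^2 * (u \<bullet> (H x *v v))\<bar> \<le> h^3 * C"
        unfolding D_def C_def by (rule second_diff[OF fd gd lip Lt h])
      have 2: "\<bar>D - h^2 * (v \<bullet> (H x *v u))\<bar> \<le> h^3 * C"
        unfolding D2 C_def using second_diff[OF fd gd lip Lt h, of x v u] by (simp add: algebra_simps)
      have "h^2 * \<bar>u \<bullet> (H x *v v) - v \<bullet> (H x *v u)\<bar> = \<bar>h^2 * (u \<bullet> (H x *v v) - v \<bullet> (H x *v u))\<bar>"
        by (simp add: abs_mult)
      also have "\<dots> = \<bar>(D - h^2 * (v \<bullet> (H x *v u))) - (D - h^2 * (u \<bullet> (H x *v v)))\<bar>"
        by (rule arg_cong[where f=abs]) (simp add: algebra_simps)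
      also have "\<dots> \<le> h^3 * C + h^3 * C" using 1 2 abs_triangle_ineq4[of "D - h^2 * (v \<bullet> (H x *v u))" "D - h^2 * (u \<bullet> (H x *v v))"] by linarith
      finally have "h^2 * \<bar>u \<bullet> (H x *v v) - v \<bullet> (H x *v u)\<bar> \<le> h^2 * (h * (2 * C))"
        by (simp add: power3_eq_cube power2_eq_square algebra_simps)
      then show ?thesis using h by (simp add: mult_le_cancel_left)
    qed
    then have "u \<bullet> (H x *v v) - v \<bullet> (H x *v u) = 0"
      by (intro small_forall_zero[of _ "2 * C"]) (auto simp: C)
    then show ?thesis by simp
  qed
  show ?thesis unfolding symmetric_matrix_def
  proof (simp add: vec_eq_iff transpose_def, intro allI)
    fix i j
    show "H x $ j $ i = H x $ i $ j" using uv[of "axis j 1" "axis i 1"] by (simp add: axis_dot_mv)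
  qed
qed

lemma grad_zero:
  fixes f :: "nat \<Rightarrow> real^'d \<Rightarrow> real" and g :: "nat \<Rightarrow> real^'d \<Rightarrow> real^'d"
  assumes fin: "finite I"
    and fd: "\<And>i y. i \<in> I \<Longrightarrow> (f i has_derivative (\<lambda>k. g i y \<bullet> k)) (at y)"
    and mn: "\<And>y. (\<Sum>i\<in>I. f i xs) \<le> (\<Sum>i\<in>I. f i y)"
  shows "(\<Sum>i\<in>I. g i xs) = 0"
proof -
  have "((\<lambda>y. \<Sum>i\<in>I. f i y) has_derivative (\<lambda>k. \<Sum>i\<in>I. g i xs \<bullet> k)) (at xs)"
    by (rule has_derivative_sum) (rule fd)
  then have "((\<lambda>y. \<Sum>i\<in>I. f i y) has_derivative (\<lambda>k. (\<Sum>i\<in>I. g i xs) \<bullet> k)) (at xs)"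
    by (simp add: inner_sum_left)
  from has_derivative_local_min[OF this] mn
  have "(\<lambda>k. (\<Sum>i\<in>I. g i xs) \<bullet> k) = (\<lambda>k. 0)" by (simp add: always_eventually)
  then have "(\<Sum>i\<in>I. g i xs) \<bullet> (\<Sum>i\<in>I. g i xs) = 0" by metis
  then show ?thesis by simp
qed

lemma taylor_grad:
  fixes g :: "real^'d \<Rightarrow> real^'d" and H :: "real^'d \<Rightarrow> real^'d^'d"
  assumes gd: "\<And>y. (g has_derivative (\<lambda>k. H y *v k)) (at y)"
    and lip: "\<And>y z. mat_norm (H y - H z) \<le> Lt * norm (y - z)" and Lt: "0 \<le> Lt"
  shows "norm (g z - g y - H z *v (z - y)) \<le> Lt * (norm (z - y))^2"
proof -
  have seg: "norm (y + t *\<^sub>R (z - y) - z) \<le> norm (z - y)" if "t \<in> {0..1}" for t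
  proof -
    have "y + t *\<^sub>R (z - y) - z = (1 - t) *\<^sub>R (y - z)" by (simp add: algebra_simps)
    moreover have "(1 - t) * norm (y - z) \<le> norm (y - z)"
      using that by (intro mult_left_le_one_le) auto
    ultimately show ?thesis using that by (simp add: norm_minus_commute)
  qed
  have "norm (g z - g y - H z *v (z - y)) \<le> norm (z - y) * (Lt * norm (z - y))"
    using lin_bound[OF gd lip Lt seg norm_ge_zero] .
  then show ?thesis by (simp add: power2_eq_square algebra_simps)
qed



definition lu :: "nat \<Rightarrow> nat \<Rightarrow> nat \<Rightarrow> nat" where
  "lu n i t = (if t < i then 0 else t - (t - i) mod n)"

definition cc :: "nat \<Rightarrow> nat \<Rightarrow> nat" where
  "cc n s = (s + n - 1) div n"

lemma lu_0: "1 \<le> i \<Longrightarrow> lu n i 0 = 0" by (simp add: lu_def)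

lemma lu_le: "lu n i t \<le> t" by (simp add: lu_def)

lemma lu_lt: assumes "1 \<le> n" "i \<le> n" shows "t < lu n i t + n"
proof (cases "t < i")
  case True then show ?thesis using assms by (simp add: lu_def)
next
  case False
  have "(t - i) mod n < n" using assms by simp
  moreover have "(t - i) mod n \<le> t" by (meson diff_le_self mod_le_divisor order_trans mod_less_eq_dividend)
  ultimately show ?thesis using False by (simp add: lu_def)
qed

lemma lu_Suc:
  assumes n: "1 \<le> n" and i: "1 \<le> i" "i \<le> n"
  shows "lu n i (Suc t) = (if i = t mod n + 1 then Suc t else lu n i t)"
proof (cases "i = t mod n + 1")
  case True
  have "\<not> Suc t < i" using True mod_less_eq_dividend[of t n] by linarith
  moreover have "(Suc t - i) mod n = 0"
  proof -
    have "Suc t - i = t div n * n" using True div_mult_mod_eq[of t n] by linarith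
    then show ?thesis by simp
  qed
  ultimately show ?thesis using True by (simp add: lu_def)
next
  case False
  show ?thesis
  proof (cases "Suc t < i")
    case True then show ?thesis using False by (simp add: lu_def)
  next
    case ge: False
    have ne: "Suc t \<noteq> i"
    proof
      assume "Suc t = i"
      then have "t < n" using i by simp
      then have "t mod n = t" by simp
      then show False using False \<open>Suc t = i\<close> by simp
    qed
    then have ti: "i \<le> t" using ge by simp
    have "(t - i) mod n \<noteq> n - 1"
    proof
      assume h: "(t - i) mod n = n - 1"
      have "t mod n = ((t - i) + i) mod n" using ti by simp
      also have "\<dots> = ((t - i) mod n + i) mod n" by (simp add: mod_add_left_eq)
      also have "\<dots> = (n - 1 + i) mod n" using h by simp
      also have "\<dots> = i - 1"
      proof -
        have e: "n - 1 + i = (i - 1) + n" using n i by simp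
        have "(n - 1 + i) mod n = ((i - 1) + n) mod n" by (simp only: e)
        also have "\<dots> = (i - 1) mod n" by (rule mod_add_self2)
        also have "\<dots> = i - 1" using i by simp
        finally show ?thesis .
      qed
      finally show False using False i by simp
    qed
    then have "(Suc t - i) mod n = (t - i) mod n + 1"
    proof -
      have "Suc t - i = Suc (t - i)" using ti by simp
      moreover have "Suc (t - i) mod n = (if Suc ((t - i) mod n) = n then 0 else Suc ((t - i) mod n))"
        by (rule mod_Suc)
      moreover have "Suc ((t - i) mod n) \<noteq> n" using \<open>(t - i) mod n \<noteq> n - 1\<close> by simp
      ultimately show ?thesis by simp
    qed
    moreover have "(t - i) mod n \<le> t - i" by simp
    ultimately show ?thesis using ge ti False by (simp add: lu_def)
  qed
qed

lemma cc_Suc: "1 \<le> n \<Longrightarrow> cc n (Suc t) = t div n + 1"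
proof -
  assume n: "1 \<le> n"
  have "Suc t + n - 1 = t + 1 * n" using n by simp
  then show ?thesis unfolding cc_def using n by simp
qed

lemma cc_0: "cc n 0 = 0" by (cases n) (auto simp: cc_def)

lemma cc_ge: assumes "1 \<le> n" "t < s + n" shows "t div n \<le> cc n s"
  unfolding cc_def using assms by (intro div_le_mono) simp

lemma cc_ceiling: assumes "1 \<le> n" shows "nat \<lceil>real s / real n\<rceil> = cc n s"
proof -
  have "\<lceil>real s / real n\<rceil> = int ((s + n - 1) div n)"
  proof (rule ceiling_unique)
    let ?q = "(s + n - 1) div n"
    have "?q * n \<le> s + n - 1" by (rule div_times_less_eq_dividend)
    moreover have "s + n - 1 < ?q * n + n"
      using div_mult_mod_eq[of "s+n-1" n] mod_less_divisor[of n "s+n-1"] assms by linarith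
    ultimately have a: "?q * n < s + n" "s \<le> ?q * n" using assms by linarith+
    show "real_of_int (int ?q) - 1 < real s / real n"
    proof -
      have "real (?q * n) < real s + real n" using a(1) by linarith
      then have "real ?q * real n < real s + real n" by simp
      then have "real ?q < real s / real n + 1" using assms by (simp add: field_simps)
      then show ?thesis by simp
    qed
    show "real s / real n \<le> real_of_int (int ?q)"
    proof -
      have "real s \<le> real ?q * real n" using a(2) by (metis of_nat_le_iff of_nat_mult)
      then show ?thesis using assms by (simp add: field_simps)
    qed
  qed
  then show ?thesis unfolding cc_def by simp
qed

lemma lu_it:
  assumes n: "1 \<le> n"
  shows "cc n (lu n (t mod n + 1) t) = t div n" and "t div n * n \<in> {lu n (t mod n + 1) t..t}"
proof -
  let ?i = "t mod n + 1"
  have "lu n ?i t = (if t < n then 0 else Suc t - n)"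
  proof (cases "t < n")
    case True then show ?thesis by (simp add: lu_def)
  next
    case False
    have "0 < t div n" using False n by (simp add: div_greater_zero_iff)
    then obtain p where p: "t div n = Suc p" by (metis gr0_implies_Suc)
    have t: "t = t div n * n + t mod n" by simp
    then have t2: "t = p * n + n + t mod n" using p by simp
    have e: "t - ?i = p * n + (n - 1)" using t2 n by linarith
    have "(p * n + (n - 1)) mod n = (n - 1) mod n" by (rule mod_mult_self3)
    then have "(t - ?i) mod n = n - 1" using n e by simp
    moreover have "\<not> t < ?i" using False mod_less_divisor[of n t] n by linarith
    ultimately show ?thesis using False n by (simp add: lu_def)
  qed
  moreover have "t div n * n \<le> t" by simp
  moreover have "Suc t - n \<le> t div n * n" if "\<not> t < n"
  proof -
    have "t mod n < n" using n by simp
    then show ?thesis using div_mult_mod_eq[of t n] by linarith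
  qed
  moreover have "cc n (Suc t - n) = t div n" if "\<not> t < n"
  proof -
    have "Suc t - n + n - 1 = t" using that n by simp
    then show ?thesis by (simp add: cc_def)
  qed
  ultimately show "cc n (lu n ?i t) = t div n" "t div n * n \<in> {lu n ?i t..t}"
    by (auto simp: cc_def)
qed

lemma mult_unique:
  fixes n s t u1 u2 :: nat
  assumes "1 \<le> n" "t < s + n" "u1 \<in> {s..t}" "u2 \<in> {s..t}" "u1 mod n = 0" "u2 mod n = 0"
  shows "u1 = u2"
proof (rule ccontr)
  assume ne: "u1 \<noteq> u2"
  have key: False if ha: "a \<in> {s..t}" and hb: "b \<in> {s..t}" and ma: "a mod n = 0"
    and mb: "b mod n = 0" and ab: "a < b" for a b
  proof -
    obtain p where p: "a = n * p" using ma by auto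
    obtain q where q: "b = n * q" using mb by auto
    have "p < q" using ab p q by simp
    then have "n * p + n \<le> n * q" by (metis Suc_leI mult_Suc_right mult_le_mono2 add.commute)
    then show False using ha hb p q assms(2) by simp
  qed
  show False using ne key assms by (metis nat_neq_iff)
qed

lemma prod_window:
  fixes om :: "nat \<Rightarrow> real"
  assumes n: "1 \<le> n" and w: "t < s + n" and one: "\<And>u. u mod n \<noteq> 0 \<Longrightarrow> om u = 1"
    and u0: "u0 \<in> {s..t}" "u0 mod n = 0"
  shows "prod om {s..t} = om u0"
proof -
  have "prod om {s..t} = prod om {u0}"
  proof (rule prod.mono_neutral_right)
    show "\<forall>u\<in>{s..t} - {u0}. om u = 1"
      using mult_unique[OF n w _ u0(1) _ u0(2)] one by blast
  qed (use u0 in auto)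
  then show ?thesis by simp
qed

lemma prod_window_bound:
  fixes om :: "nat \<Rightarrow> real"
  assumes n: "1 \<le> n" and w: "t < s + n" and one: "\<And>u. u mod n \<noteq> 0 \<Longrightarrow> om u = 1"
    and bd: "\<And>u. 1 \<le> om u \<and> om u \<le> W"
  shows "1 \<le> prod om {s..t} \<and> prod om {s..t} \<le> W"
proof (cases "\<exists>u0\<in>{s..t}. u0 mod n = 0")
  case True
  then obtain u0 where u0: "u0 \<in> {s..t}" "u0 mod n = 0" by (rule bexE)
  have "prod om {s..t} = om u0" by (rule prod_window[OF n w one u0])
  then show ?thesis using bd[of u0] by simp
next
  case False
  then have "prod om {s..t} = 1" using one by (intro prod.neutral) blast
  then show ?thesis using bd[of 0] by auto
qed



definition Wf :: "real \<Rightarrow> real \<Rightarrow> nat \<Rightarrow> real" where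
  "Wf a \<rho> q = exp (4 * a * (\<Sum>j<q. \<rho>^j))"

definition Sf :: "real \<Rightarrow> real \<Rightarrow> real \<Rightarrow> real \<Rightarrow> nat \<Rightarrow> real" where
  "Sf \<sigma>0 C \<rho> \<epsilon> q = \<sigma>0 + C * (\<Sum>j<q. (\<rho>/\<epsilon>)^j)"

definition bnd :: "real \<Rightarrow> real \<Rightarrow> real \<Rightarrow> real \<Rightarrow> real \<Rightarrow> nat \<Rightarrow> real" where
  "bnd \<sigma>0 C a \<rho> \<epsilon> q = \<epsilon>^q * Wf a \<rho> q * Sf \<sigma>0 C \<rho> \<epsilon> q"

lemma bnd_0: "bnd \<sigma>0 C a \<rho> \<epsilon> 0 = \<sigma>0" by (simp add: bnd_def Wf_def Sf_def)

lemma E_le_exp: fixes x :: real assumes "0 \<le> x" shows "(1 + x)^2 * (1 + 2*x) \<le> exp (4 * x)"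
proof -
  have "(1 + x)^2 \<le> (exp x)^2" using assms by (intro power_mono) (auto simp: exp_ge_add_one_self)
  moreover have "1 + 2*x \<le> exp (2*x)" by (rule exp_ge_add_one_self)
  ultimately have "(1 + x)^2 * (1 + 2*x) \<le> (exp x)^2 * exp (2*x)"
    using assms by (intro mult_mono) auto
  also have "\<dots> = exp (4 * x)" by (simp add: power2_eq_square exp_add[symmetric])
  finally show ?thesis .
qed

lemma E_minus: fixes x :: real assumes "0 \<le> x" shows "(1 + x)^2 * (1 + 2*x) - 1 \<le> 4 * x * ((1 + x)^2 * (1 + 2*x))"
proof -
  have "(1 + x)^2 * (1 + 2*x) - 1 = 4*x + 5*x^2 + 2*x^3" by (simp add: power2_eq_square power3_eq_cube algebra_simps)
  also have "\<dots> \<le> 4*x + 16*x^2 + 20*x^3 + 8*x^4" using assms by simp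
  also have "\<dots> = 4 * x * ((1 + x)^2 * (1 + 2*x))" by (simp add: power2_eq_square power3_eq_cube power4_eq_xxxx algebra_simps)
  finally show ?thesis .
qed

lemma num_step:
  fixes \<epsilon> a \<rho> D \<sigma>0 \<nu>0 :: real
  assumes e: "0 < \<epsilon>" and a: "0 \<le> a" and r: "0 \<le> \<rho>" and D: "0 \<le> D" and s0: "0 \<le> \<sigma>0"
    and nu0: "\<nu>0 \<le> bnd \<sigma>0 (4 * D * a) a \<rho> \<epsilon> q"
    and x: "x = a * \<rho>^q" and E: "E = (1 + x)^2 * (1 + 2*x)"
  shows "\<epsilon> * (E * \<nu>0 + D * (E - 1)) \<le> bnd \<sigma>0 (4 * D * a) a \<rho> \<epsilon> (Suc q)"
proof -
  let ?C = "4 * D * a"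
  let ?W = "Wf a \<rho> q" and ?S = "Sf \<sigma>0 ?C \<rho> \<epsilon> q"
  have x0: "0 \<le> x" using x a r by simp
  have E0: "0 \<le> E" using E x0 by simp
  have Eexp: "E \<le> exp (4*x)" using E E_le_exp[OF x0] by simp
  have Em: "E - 1 \<le> 4 * x * E" using E E_minus[OF x0] by simp
  have W1: "1 \<le> ?W" unfolding Wf_def using a r by (simp add: sum_nonneg)
  have S0: "0 \<le> ?S" unfolding Sf_def using s0 D a r e by (intro add_nonneg_nonneg mult_nonneg_nonneg sum_nonneg) auto
  have WS: "Wf a \<rho> (Suc q) = ?W * exp (4*x)" unfolding Wf_def x by (simp add: exp_add[symmetric] algebra_simps)
  have SS: "Sf \<sigma>0 ?C \<rho> \<epsilon> (Suc q) = ?S + ?C * (\<rho>/\<epsilon>)^q" unfolding Sf_def by (simp add: algebra_simps)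
  have eq: "\<epsilon>^q * (?C * (\<rho>/\<epsilon>)^q) = 4 * D * x"
    using e by (simp add: x power_divide field_simps)
  have t1: "\<epsilon> * (E * \<nu>0) \<le> \<epsilon>^(Suc q) * (?W * exp (4*x)) * ?S"
  proof -
    have "E * \<nu>0 \<le> E * (\<epsilon>^q * ?W * ?S)" using nu0 E0 unfolding bnd_def by (intro mult_left_mono) auto
    also have "\<dots> \<le> exp (4*x) * (\<epsilon>^q * ?W * ?S)"
      using Eexp e W1 S0 by (intro mult_right_mono) auto
    finally have "\<epsilon> * (E * \<nu>0) \<le> \<epsilon> * (exp (4*x) * (\<epsilon>^q * ?W * ?S))"
      using e by (intro mult_left_mono) auto
    then show ?thesis by (simp add: algebra_simps)
  qed
  have t2: "\<epsilon> * (D * (E - 1)) \<le> \<epsilon>^(Suc q) * (?W * exp (4*x)) * (?C * (\<rho>/\<epsilon>)^q)"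
  proof -
    have "D * (E - 1) \<le> D * (4 * x * E)" using Em D by (intro mult_left_mono) auto
    also have "\<dots> \<le> D * (4 * x * (?W * exp (4*x)))"
    proof -
      have "exp (4*x) \<le> ?W * exp (4*x)" using W1 by (simp add: mult_le_cancel_right1)
      then have "E \<le> ?W * exp (4*x)" using Eexp by linarith
      then show ?thesis using D x0 by (intro mult_left_mono) auto
    qed
    also have "\<dots> = (?W * exp (4*x)) * (\<epsilon>^q * (?C * (\<rho>/\<epsilon>)^q))" by (simp only: eq) (simp add: algebra_simps)
    finally have "\<epsilon> * (D * (E - 1)) \<le> \<epsilon> * ((?W * exp (4*x)) * (\<epsilon>^q * (?C * (\<rho>/\<epsilon>)^q)))"
      using e by (intro mult_left_mono) auto
    then show ?thesis by (simp add: algebra_simps)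
  qed
  have "\<epsilon> * (E * \<nu>0 + D * (E - 1)) = \<epsilon> * (E * \<nu>0) + \<epsilon> * (D * (E - 1))" by (simp add: algebra_simps)
  also have "\<dots> \<le> \<epsilon>^(Suc q) * (?W * exp (4*x)) * ?S + \<epsilon>^(Suc q) * (?W * exp (4*x)) * (?C * (\<rho>/\<epsilon>)^q)"
    using t1 t2 by (rule add_mono)
  also have "\<dots> = bnd \<sigma>0 ?C a \<rho> \<epsilon> (Suc q)"
    unfolding bnd_def WS SS by (simp add: algebra_simps)
  finally show ?thesis .
qed

lemma geom_le: fixes x :: real assumes "0 \<le> x" "x < 1" shows "(\<Sum>j<q. x^j) \<le> 1 / (1 - x)"
proof -
  have "(\<Sum>j<q. x^j) = (1 - x^q) / (1 - x)" using assms by (simp add: sum_gp_strict)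
  also have "\<dots> \<le> 1 / (1 - x)" using assms by (intro divide_right_mono) auto
  finally show ?thesis .
qed

lemma bnd_final:
  assumes e: "0 < \<epsilon>" and a: "0 \<le> a" and r: "0 \<le> \<rho>" "\<rho> < \<epsilon>" "\<epsilon> \<le> 1" and C: "0 \<le> C" and s0: "0 \<le> \<sigma>0"
  shows "bnd \<sigma>0 C a \<rho> \<epsilon> q \<le> \<epsilon>^q * ((\<sigma>0 + C / (1 - \<rho>/\<epsilon>)) * exp (4 * a / (1 - \<rho>)))"
proof -
  have r1: "\<rho> < 1" using r by simp
  have W: "Wf a \<rho> q \<le> exp (4 * a / (1 - \<rho>))"
  proof -
    have "4 * a * (\<Sum>j<q. \<rho>^j) \<le> 4 * a * (1 / (1 - \<rho>))"
      using geom_le[OF r(1) r1] a by (intro mult_left_mono) auto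
    then show ?thesis unfolding Wf_def by simp
  qed
  have S: "Sf \<sigma>0 C \<rho> \<epsilon> q \<le> \<sigma>0 + C / (1 - \<rho>/\<epsilon>)"
  proof -
    have "0 \<le> \<rho>/\<epsilon>" "\<rho>/\<epsilon> < 1" using r e by (auto simp: field_simps)
    then have "C * (\<Sum>j<q. (\<rho>/\<epsilon>)^j) \<le> C * (1 / (1 - \<rho>/\<epsilon>))"
      using geom_le C by (intro mult_left_mono) auto
    then show ?thesis unfolding Sf_def by simp
  qed
  have S0: "0 \<le> Sf \<sigma>0 C \<rho> \<epsilon> q" unfolding Sf_def using s0 C r e by (intro add_nonneg_nonneg mult_nonneg_nonneg sum_nonneg) auto
  have "Wf a \<rho> q * Sf \<sigma>0 C \<rho> \<epsilon> q \<le> exp (4 * a / (1 - \<rho>)) * (\<sigma>0 + C / (1 - \<rho>/\<epsilon>))"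
    using W S S0 by (intro mult_mono) (auto simp: Wf_def)
  then have "\<epsilon>^q * (Wf a \<rho> q * Sf \<sigma>0 C \<rho> \<epsilon> q) \<le> \<epsilon>^q * (exp (4 * a / (1 - \<rho>)) * (\<sigma>0 + C / (1 - \<rho>/\<epsilon>)))"
    using e by (intro mult_left_mono) auto
  then show ?thesis unfolding bnd_def by (simp add: algebra_simps)
qed



lemma sum_mv: "finite I \<Longrightarrow> (\<Sum>i\<in>I. (A i :: real^'n^'m)) *v v = (\<Sum>i\<in>I. A i *v v)"
  by (induction I rule: finite_induct) (auto simp: matrix_vector_mult_add_rdistrib)

lemma scaleR_mv: "(c *\<^sub>R (A :: real^'n^'m)) *v v = c *\<^sub>R (A *v v)"
  by (simp add: scaleR_matrix_vector_assoc)

lemma sym_scaleR: "symmetric_matrix A \<Longrightarrow> symmetric_matrix (c *\<^sub>R A)"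
  by (simp add: symmetric_matrix_def transpose_scalar)

lemma invertible_coercive:
  fixes A :: "real^'n^'n"
  assumes "\<And>v. c * (v \<bullet> v) \<le> v \<bullet> (A *v v)" "0 < c"
  shows "invertible A"
proof -
  have "inj ((*v) A)"
  proof (rule injI)
    fix u w assume "A *v u = A *v w"
    then have "A *v (u - w) = 0" by (simp add: matrix_vector_mult_diff_distrib)
    then have "c * ((u - w) \<bullet> (u - w)) \<le> 0" using assms(1)[of "u - w"] by simp
    then have "(u - w) \<bullet> (u - w) \<le> 0" using assms(2) by (simp add: mult_le_0_iff)
    then have "(u - w) \<bullet> (u - w) = 0" using inner_ge_zero[of "u - w"] by linarith
    then have "u - w = 0" by simp
    then show "u = w" by simp
  qed
  then show ?thesis using matrix_left_invertible_injective invertible_left_inverse by blast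
qed

lemma coercive_norm:
  fixes A :: "real^'n^'n"
  assumes "\<And>v. c * (v \<bullet> v) \<le> v \<bullet> (A *v v)" "0 < c"
  shows "c * norm v \<le> norm (A *v v)"
proof (cases "v = 0")
  case True then show ?thesis by simp
next
  case False
  have "c * norm v * norm v = c * (v \<bullet> v)" by (simp add: power2_norm_eq_inner[symmetric] power2_eq_square)
  also have "\<dots> \<le> v \<bullet> (A *v v)" by (rule assms(1))
  also have "\<dots> \<le> norm v * norm (A *v v)" by (rule Cauchy_Schwarz_ineq2[THEN abs_le_D1])
  finally show ?thesis using False by (simp add: mult.commute)
qed

lemma matrix_inv_right:
  fixes A :: "real^'n^'n"
  assumes "invertible A" shows "A *v (matrix_inv A *v w) = w"
proof -
  have "A ** matrix_inv A = mat 1"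
    using assms unfolding invertible_def matrix_inv_def by (metis (mono_tags, lifting) someI_ex)
  then show ?thesis by (simp add: matrix_vector_mul_assoc)
qed

locale lctx =
  fixes n :: nat and g :: "nat \<Rightarrow> real^'d \<Rightarrow> real^'d" and H :: "nat \<Rightarrow> real^'d \<Rightarrow> real^'d^'d"
    and \<mu> L Lt \<rho> \<epsilon> \<kappa> D a r0 \<sigma>0 :: real and xs :: "real^'d"
    and x :: "nat \<Rightarrow> real^'d" and z :: "nat \<Rightarrow> nat \<Rightarrow> real^'d" and B :: "nat \<Rightarrow> nat \<Rightarrow> real^'d^'d"
    and U :: "nat \<Rightarrow> real^'k::finite^'d" and om :: "nat \<Rightarrow> real"
  assumes n: "1 \<le> n" and mu: "0 < \<mu>" and muL: "\<mu> \<le> L" and Lt: "0 \<le> Lt"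
    and kap: "\<kappa> = L / \<mu>" and Dd: "D = real CARD('d) * \<kappa>"
    and eps: "\<epsilon> = 1 - real CARD('k) / real CARD('d)" and kd: "CARD('k) < CARD('d)"
    and rho: "0 < \<rho>" "\<rho> < \<epsilon>"
    and Hsym: "\<And>i y. i \<in> {1..n} \<Longrightarrow> symmetric_matrix (H i y)"
    and Hlow: "\<And>i y v. i \<in> {1..n} \<Longrightarrow> \<mu> * (v \<bullet> v) \<le> v \<bullet> (H i y *v v)"
    and Hup: "\<And>i y v. i \<in> {1..n} \<Longrightarrow> v \<bullet> (H i y *v v) \<le> L * (v \<bullet> v)"
    and Hlip: "\<And>i y y'. i \<in> {1..n} \<Longrightarrow> mat_norm (H i y - H i y') \<le> Lt * norm (y - y')"
    and tay: "\<And>i y y'. i \<in> {1..n} \<Longrightarrow> norm (g i y - g i y' - H i y *v (y - y')) \<le> Lt * (norm (y - y'))^2"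
    and gsum: "(\<Sum>i\<in>{1..n}. g i xs) = 0"
    and run: "lisr_run n g H om x z B U"
    and om: "\<And>u. om u = (if u mod n = 0 then (1 + a * \<rho>^(cc n u))^2 else 1)"
    and a0: "0 \<le> a" and a1: "a \<le> 1" and aD: "a * (D + 1) \<le> \<rho> / 8" and Ltr: "Lt * r0 \<le> a * \<mu>"
    and s0: "0 \<le> \<sigma>0" and del: "(\<sigma>0 + 4 * D * a / (1 - \<rho> / \<epsilon>)) * exp (4 * a / (1 - \<rho>)) \<le> \<rho> / 8"
    and e0: "norm (x 0 - xs) \<le> r0"
    and init: "\<And>i. i \<in> {1..n} \<Longrightarrow> pos_def (B i 0) \<and> loewner_le (om 0 *\<^sub>R H i (x 0)) (B i 0) \<and>
                  nu \<kappa> ((1 / om 0) *\<^sub>R B i 0) (H i (x 0)) \<le> \<sigma>0"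
begin

definition "bd q = bnd \<sigma>0 (4 * D * a) a \<rho> \<epsilon> q"
definition "Gm i s = (1 / om s) *\<^sub>R B i s"
definition "e00 = norm (x 0 - xs)"

lemma dpos: "0 < real CARD('d)" by simp
lemma kappa_pos: "0 < \<kappa>" using kap mu muL by simp
lemma D_pos: "0 < D" using Dd kappa_pos by simp
lemma eps_pos: "0 < \<epsilon>" using rho by simp
lemma eps_le1: "\<epsilon> \<le> 1" using eps by simp
lemma rho1: "\<rho> < 1" using rho eps_le1 by simp
lemma DL: "real CARD('d) * L = D * \<mu>" using Dd kap mu by simp

lemma om_ge1: "1 \<le> om u"
proof -
  have "0 \<le> a * \<rho>^(cc n u)" using a0 rho by simp
  then have "1 \<le> (1 + a * \<rho>^(cc n u))^2" by (intro one_le_power) simp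
  then show ?thesis by (simp add: om)
qed

lemma om_le: "om u \<le> (1 + a)^2"
proof -
  have "a * \<rho>^(cc n u) \<le> a * 1" using a0 rho rho1 by (intro mult_left_mono power_le_one) auto
  then have "(1 + a * \<rho>^(cc n u))^2 \<le> (1 + a)^2" using a0 rho by (intro power_mono) auto
  moreover have "1 \<le> (1 + a)^2" using a0 by (intro one_le_power) simp
  ultimately show ?thesis by (simp add: om)
qed

lemma om_pos: "0 < om u" using om_ge1[of u] by simp

lemma run_step: "let it = t mod n + 1 in
        x (Suc t) = matrix_inv (\<Sum>i\<in>{1..n}. B i t) *v
                      ((\<Sum>i\<in>{1..n}. B i t *v z i t) - (\<Sum>i\<in>{1..n}. g i (z i t))) \<and>
        (\<forall>i\<in>{1..n}. z i (Suc t) = (if i = it then x (Suc t) else z i t)) \<and>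
        is_Ek (B it t - H it (z it (Suc t))) (U t) \<and>
        (\<forall>i\<in>{1..n}. B i (Suc t) =
            (if i = it then om (Suc t) *\<^sub>R SRk (B i t) (H i (z i (Suc t))) (U t)
             else om (Suc t) *\<^sub>R B i t))"
  using run unfolding lisr_run_def by blast

lemma it_in: "t mod n + 1 \<in> {1..n}" using n by (simp add: Suc_leI)

lemma run_z: "i \<in> {1..n} \<Longrightarrow> z i t = x (lu n i t)"
proof (induction t)
  case 0 then show ?case using run lu_0 unfolding lisr_run_def by auto
next
  case (Suc t)
  have "z i (Suc t) = (if i = t mod n + 1 then x (Suc t) else z i t)"
    using run_step[of t] Suc.prems by (simp add: Let_def)
  then show ?case using Suc lu_Suc[OF n, of i t] by auto
qed

lemma run_B: "i \<in> {1..n} \<Longrightarrow> B i t = prod om {Suc (lu n i t)..t} *\<^sub>R B i (lu n i t)"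
proof (induction t)
  case 0 then show ?case using lu_0 by auto
next
  case (Suc t)
  have lu: "lu n i (Suc t) = (if i = t mod n + 1 then Suc t else lu n i t)" using lu_Suc[OF n] Suc.prems by auto
  show ?case
  proof (cases "i = t mod n + 1")
    case True then show ?thesis using lu by simp
  next
    case False
    have B: "B i (Suc t) = om (Suc t) *\<^sub>R B i t" using run_step[of t] Suc.prems False by (simp add: Let_def)
    have le: "Suc (lu n i t) \<le> Suc t" using lu_le[of n i t] by simp
    have "prod om {Suc (lu n i t)..Suc t} = prod om {Suc (lu n i t)..t} * om (Suc t)"
      using le by (simp add: prod.cl_ivl_Suc)
    then show ?thesis using B Suc False lu by simp
  qed
qed

lemma H_tr: "i \<in> {1..n} \<Longrightarrow> real CARD('d) * \<mu> \<le> trace (H i y) \<and> trace (H i y) \<le> real CARD('d) * L"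
proof -
  assume i: "i \<in> {1..n}"
  have lo: "\<mu> \<le> axis j 1 \<bullet> (H i y *v axis j 1)" for j using Hlow[OF i, where y=y and v="axis j 1"] by simp
  have hi: "axis j 1 \<bullet> (H i y *v axis j 1) \<le> L" for j using Hup[OF i, where y=y and v="axis j 1"] by simp
  have "(\<Sum>j\<in>(UNIV::'d set). \<mu>) \<le> trace (H i y)" unfolding trace_as_dots by (rule sum_mono) (rule lo)
  moreover have "trace (H i y) \<le> (\<Sum>j\<in>(UNIV::'d set). L)" unfolding trace_as_dots by (rule sum_mono) (rule hi)
  ultimately show ?thesis by simp
qed

lemma H_trpos: "i \<in> {1..n} \<Longrightarrow> 0 < trace (H i y)"
  using H_tr[of i y] mu dpos by (meson mult_pos_pos order_less_le_trans)

lemma nu_tr: "i \<in> {1..n} \<Longrightarrow> trace (G - H i y) = nu \<kappa> G (H i y) * trace (H i y) / D"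
  using H_trpos[of i y] D_pos kappa_pos unfolding nu_def Dd by (simp add: field_simps)


definition "Inv t \<longleftrightarrow> (\<forall>s\<le>t. norm (x s - xs) \<le> \<rho>^(cc n s) * e00) \<and>
   (\<forall>i\<in>{1..n}. symmetric_matrix (Gm i (lu n i t)) \<and> loewner_le (H i (x (lu n i t))) (Gm i (lu n i t)) \<and>
      nu \<kappa> (Gm i (lu n i t)) (H i (x (lu n i t))) \<le> bd (cc n (lu n i t)))"

definition "\<delta>0 = (\<sigma>0 + 4 * D * a / (1 - \<rho> / \<epsilon>)) * exp (4 * a / (1 - \<rho>))"

lemma bd_final: "bd q \<le> \<epsilon>^q * \<delta>0"
  unfolding bd_def \<delta>0_def
  using bnd_final[OF eps_pos a0 _ rho(2) eps_le1 _ s0] rho D_pos a0 by auto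

lemma delta0_nn: "0 \<le> \<delta>0"
proof -
  have "0 \<le> 4 * D * a / (1 - \<rho> / \<epsilon>)" using D_pos a0 rho eps_pos by (simp add: field_simps)
  then show ?thesis unfolding \<delta>0_def using s0 by simp
qed

lemma bd_small: "bd q \<le> \<rho> / 8"
proof -
  have e1: "\<epsilon>^q \<le> 1" using eps_pos eps_le1 by (simp add: power_le_one)
  have "\<epsilon>^q * \<delta>0 \<le> \<delta>0" using mult_right_mono[OF e1 delta0_nn] by simp
  then show ?thesis using bd_final[of q] del unfolding \<delta>0_def by linarith
qed

lemma e00_le: "e00 \<le> r0" using e0 unfolding e00_def .

lemma trace_scaleR: "trace (c *\<^sub>R (A::real^'n^'n)) = c * trace A"
  by (simp add: trace_def sum_distrib_left)

lemma Gm_B: "om s *\<^sub>R Gm i s = B i s" unfolding Gm_def using om_pos[of s] by simp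

lemma blk:
  assumes i: "i \<in> {1..n}"
  shows "B i t = prod om {lu n i t..t} *\<^sub>R Gm i (lu n i t) \<and> 1 \<le> prod om {lu n i t..t} \<and>
         prod om {lu n i t..t} \<le> (1 + a)^2 \<and> z i t = x (lu n i t)"
proof -
  let ?s = "lu n i t"
  have le: "?s \<le> t" by (rule lu_le)
  have "prod om {?s..t} = om ?s * prod om {Suc ?s..t}" using le by (simp add: prod.atLeast_Suc_atMost)
  moreover have "B i t = prod om {Suc ?s..t} *\<^sub>R (om ?s *\<^sub>R Gm i ?s)"
    by (simp only: Gm_B run_B[OF i, of t])
  ultimately have "B i t = prod om {?s..t} *\<^sub>R Gm i ?s" by (simp add: mult.commute)
  moreover have "1 \<le> prod om {?s..t} \<and> prod om {?s..t} \<le> (1 + a)^2"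
  proof (rule prod_window_bound[OF n])
    show "t < ?s + n" using lu_lt[OF n] i by simp
    show "\<And>u. u mod n \<noteq> 0 \<Longrightarrow> om u = 1" by (simp add: om)
    show "\<And>u. 1 \<le> om u \<and> om u \<le> (1 + a)^2" using om_ge1 om_le by auto
  qed
  ultimately show ?thesis using run_z[OF i] by simp
qed

lemma Gpsd:
  assumes le: "loewner_le A G" and sA: "symmetric_matrix A" and sG: "symmetric_matrix G"
    and c: "1 \<le> c" and Ap: "\<And>v. 0 \<le> v \<bullet> (A *v v)"
  shows "symmetric_matrix (c *\<^sub>R G - A) \<and> psd (c *\<^sub>R G - A)"
proof
  show "symmetric_matrix (c *\<^sub>R G - A)" using sym_diff[OF sym_scaleR[OF sG] sA] .
  show "psd (c *\<^sub>R G - A)" unfolding psd_def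
  proof
    fix v
    have AG: "v \<bullet> (A *v v) \<le> v \<bullet> (G *v v)" using le loewner_le_iff by blast
    have "v \<bullet> (G *v v) \<le> c * (v \<bullet> (G *v v))"
      using c AG Ap[of v] by (simp add: mult_le_cancel_right1)
    then show "0 \<le> v \<bullet> ((c *\<^sub>R G - A) *v v)"
      using AG by (simp add: matrix_vector_mult_diff_rdistrib inner_diff_right scaleR_mv)
  qed
qed


lemma H_psd: "i \<in> {1..n} \<Longrightarrow> 0 \<le> v \<bullet> (H i y *v v)"
  using Hlow[of i v y] mu by (meson inner_ge_zero mult_nonneg_nonneg less_imp_le order_trans)

lemma blk_facts:
  assumes I: "Inv t" and i: "i \<in> {1..n}"
  shows "symmetric_matrix (B i t - H i (z i t)) \<and> psd (B i t - H i (z i t)) \<and>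
    trace (B i t - H i (z i t)) \<le> \<rho> * \<mu> / 2 + 3 * a * D * \<mu> \<and>
    (\<forall>v. \<mu> * (v \<bullet> v) \<le> v \<bullet> (B i t *v v)) \<and> symmetric_matrix (B i t)"
proof -
  define s where "s = lu n i t"
  define G where "G = Gm i s"
  define A where "A = H i (x s)"
  define \<Omega> where "\<Omega> = prod om {s..t}"
  have bk: "B i t = \<Omega> *\<^sub>R G" "1 \<le> \<Omega>" "\<Omega> \<le> (1 + a)^2" "z i t = x s"
    using blk[OF i, of t] unfolding s_def G_def \<Omega>_def by auto
  have sG: "symmetric_matrix G" and AG: "loewner_le A G" and nuG: "nu \<kappa> G A \<le> bd (cc n s)"
    using I i unfolding Inv_def s_def G_def A_def by auto
  have sA: "symmetric_matrix A" unfolding A_def using Hsym[OF i] .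
  have Ap: "0 \<le> v \<bullet> (A *v v)" for v unfolding A_def by (rule H_psd[OF i])
  have P: "symmetric_matrix (\<Omega> *\<^sub>R G - A) \<and> psd (\<Omega> *\<^sub>R G - A)" by (rule Gpsd[OF AG sA sG bk(2) Ap])
  have trGA0: "0 \<le> trace (G - A)" using AG unfolding loewner_le_def by (rule psd_trace_nonneg)
  have trGA: "trace (G - A) = nu \<kappa> G A * trace A / D" unfolding A_def by (rule nu_tr[OF i])
  have trA: "0 < trace A" "trace A \<le> D * \<mu>" unfolding A_def using H_trpos[OF i] H_tr[OF i] DL by auto
  have trGA1: "trace (G - A) \<le> \<rho> * \<mu> / 8"
  proof -
    have "nu \<kappa> G A \<le> \<rho> / 8" using nuG bd_small by (meson order_trans)
    then have h: "nu \<kappa> G A * (trace A / D) \<le> (\<rho> / 8) * (trace A / D)"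
      using trA D_pos by (intro mult_right_mono) auto
    have "trace (G - A) \<le> (\<rho> / 8) * (trace A / D)" unfolding trGA using h by simp
    also have "\<dots> \<le> (\<rho> / 8) * \<mu>" using trA D_pos rho by (intro mult_left_mono) (auto simp: field_simps)
    finally show ?thesis by simp
  qed
  have sq: "a * a \<le> a" using mult_left_le_one_le[OF a0 a0 a1] .
  have "(1 + a)^2 = 1 + 2 * a + a * a" by (simp add: power2_eq_square algebra_simps)
  then have O3: "\<Omega> - 1 \<le> 3 * a" using bk(3) sq by linarith
  then have O4: "\<Omega> \<le> 4" using a1 by linarith
  have "trace (\<Omega> *\<^sub>R G - A) = \<Omega> * trace (G - A) + (\<Omega> - 1) * trace A"
    by (simp add: trace_sub trace_scaleR algebra_simps)
  also have "\<dots> \<le> 4 * (\<rho> * \<mu> / 8) + (3 * a) * (D * \<mu>)"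
    using O4 O3 trGA0 trGA1 trA bk(2) a0 by (intro add_mono mult_mono) auto
  finally have tr: "trace (\<Omega> *\<^sub>R G - A) \<le> \<rho> * \<mu> / 2 + 3 * a * D * \<mu>" by (simp add: algebra_simps)
  have co: "\<mu> * (v \<bullet> v) \<le> v \<bullet> (B i t *v v)" for v
  proof -
    have "\<mu> * (v \<bullet> v) \<le> v \<bullet> (A *v v)" unfolding A_def by (rule Hlow[OF i])
    also have "\<dots> \<le> v \<bullet> (G *v v)" using AG loewner_le_iff by blast
    also have "\<dots> \<le> \<Omega> * (v \<bullet> (G *v v))" using bk(2) Ap[of v] \<open>v \<bullet> (A *v v) \<le> v \<bullet> (G *v v)\<close>
      by (simp add: mult_le_cancel_right1)
    finally show ?thesis using bk(1) by (simp add: scaleR_mv)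
  qed
  show ?thesis using P tr co bk sym_scaleR[OF sG] unfolding A_def by simp
qed

lemma xstep:
  assumes I: "Inv t"
  shows "norm (x (Suc t) - xs) \<le> \<rho>^(t div n + 1) * e00 \<and> invertible (\<Sum>i\<in>{1..n}. B i t) \<and>
         (\<forall>i\<in>{1..n}. pos_def (B i t))"
proof -
  let ?I = "{1..n}"
  define Bs where "Bs = (\<Sum>i\<in>?I. B i t)"
  have fin: "finite ?I" by simp
  have cI: "real (card ?I) = real n" by simp
  have nmu: "0 < real n * \<mu>" using n mu by simp
  have co: "real n * \<mu> * (v \<bullet> v) \<le> v \<bullet> (Bs *v v)" for v
  proof -
    have "v \<bullet> (Bs *v v) = (\<Sum>i\<in>?I. v \<bullet> (B i t *v v))" unfolding Bs_def by (simp add: sum_mv inner_sum_right)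
    moreover have "(\<Sum>i\<in>?I. \<mu> * (v \<bullet> v)) \<le> (\<Sum>i\<in>?I. v \<bullet> (B i t *v v))"
      by (rule sum_mono) (use blk_facts[OF I] in blast)
    ultimately show ?thesis by simp
  qed
  have inv: "invertible Bs" by (rule invertible_coercive[OF co nmu])
  have pd: "pos_def (B i t)" if i: "i \<in> ?I" for i
    unfolding pos_def_def
  proof
    show "symmetric_matrix (B i t)" using blk_facts[OF I i] by blast
    show "\<forall>v. v \<noteq> 0 \<longrightarrow> 0 < v \<bullet> (B i t *v v)"
    proof (intro allI impI)
      fix v :: "real^'d" assume "v \<noteq> 0"
      then have "0 < \<mu> * (v \<bullet> v)" using mu by simp
      then show "0 < v \<bullet> (B i t *v v)" using blk_facts[OF I i] by (meson less_le_trans)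
    qed
  qed
  define w where "w = (\<Sum>i\<in>?I. B i t *v z i t) - (\<Sum>i\<in>?I. g i (z i t))"
  have xS: "x (Suc t) = matrix_inv Bs *v w" using run_step[of t] unfolding Bs_def w_def by (simp add: Let_def)
  have Bx: "Bs *v x (Suc t) = w" unfolding xS by (rule matrix_inv_right[OF inv])
  define trm where "trm i = B i t *v (z i t - xs) - (g i (z i t) - g i xs)" for i
  have By: "Bs *v (x (Suc t) - xs) = (\<Sum>i\<in>?I. trm i)"
  proof -
    define S1 where "S1 = (\<Sum>i\<in>?I. B i t *v z i t)"
    define S2 where "S2 = (\<Sum>i\<in>?I. B i t *v xs)"
    define S3 where "S3 = (\<Sum>i\<in>?I. g i (z i t))"
    define S4 where "S4 = (\<Sum>i\<in>?I. g i xs)"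
    have "(\<Sum>i\<in>?I. trm i) = (\<Sum>i\<in>?I. B i t *v z i t - B i t *v xs - g i (z i t) + g i xs)"
      by (rule sum.cong) (simp_all add: trm_def matrix_vector_mult_diff_distrib)
    also have "\<dots> = S1 - S2 - S3 + S4" unfolding S1_def S2_def S3_def S4_def
      by (simp add: sum.distrib sum_subtractf)
    finally have ts: "(\<Sum>i\<in>?I. trm i) = S1 - S2 - S3 + S4" .
    have "Bs *v (x (Suc t) - xs) = w - Bs *v xs" by (simp add: Bx matrix_vector_mult_diff_distrib)
    also have "\<dots> = S1 - S3 - S2" unfolding w_def Bs_def S1_def S2_def S3_def by (simp add: sum_mv)
    finally show ?thesis using ts gsum unfolding S4_def by simp
  qed
  have tb: "norm (trm i) \<le> \<rho> * \<mu> * (\<rho>^(t div n) * e00)" if i: "i \<in> ?I" for i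
  proof -
    define s where "s = lu n i t"
    define P where "P = B i t - H i (z i t)"
    define ei where "ei = norm (z i t - xs)"
    have zi: "z i t = x s" unfolding s_def using run_z[OF i] .
    have fP: "symmetric_matrix P" "psd P" "trace P \<le> \<rho> * \<mu> / 2 + 3 * a * D * \<mu>"
      using blk_facts[OF I i] unfolding P_def by auto
    have ei: "ei \<le> \<rho>^(t div n) * e00"
    proof -
      have "ei \<le> \<rho>^(cc n s) * e00" using I lu_le[of n i t] unfolding Inv_def ei_def zi s_def by blast
      also have "\<dots> \<le> \<rho>^(t div n) * e00"
      proof (rule mult_right_mono)
        show "\<rho>^(cc n s) \<le> \<rho>^(t div n)"
          using cc_ge[OF n, of t s] lu_lt[OF n, of i t] i rho rho1 unfolding s_def
          by (intro power_decreasing) auto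
        show "0 \<le> e00" unfolding e00_def by simp
      qed
      finally show ?thesis .
    qed
    have ei0: "0 \<le> ei" unfolding ei_def by simp
    have ei1: "Lt * ei \<le> a * \<mu>"
    proof -
      have "\<rho>^(t div n) \<le> 1" using rho rho1 by (simp add: power_le_one)
      then have "ei \<le> r0" using ei e00_le unfolding e00_def
        by (meson mult_left_le_one_le norm_ge_zero order_trans zero_le_power less_imp_le rho(1))
      then show ?thesis using Lt Ltr by (meson mult_left_mono order_trans)
    qed
    have eq: "trm i = P *v (z i t - xs) - (g i (z i t) - g i xs - H i (z i t) *v (z i t - xs))"
      unfolding trm_def P_def by (simp add: matrix_vector_mult_diff_rdistrib algebra_simps)
    have "norm (trm i) \<le> norm (P *v (z i t - xs)) + norm (g i (z i t) - g i xs - H i (z i t) *v (z i t - xs))"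
      unfolding eq by (rule norm_triangle_ineq4)
    also have "\<dots> \<le> trace P * ei + Lt * ei^2"
      using psd_norm_le_trace[OF fP(1,2)] tay[OF i, of "z i t" xs] unfolding ei_def by (intro add_mono) auto
    also have "\<dots> \<le> (\<rho> * \<mu> / 2 + 3 * a * D * \<mu>) * ei + (a * \<mu>) * ei"
    proof (rule add_mono)
      show "trace P * ei \<le> (\<rho> * \<mu> / 2 + 3 * a * D * \<mu>) * ei" using fP(3) ei0 by (rule mult_right_mono)
      have e: "Lt * ei^2 = (Lt * ei) * ei" by (simp add: power2_eq_square)
      show "Lt * ei^2 \<le> (a * \<mu>) * ei" unfolding e by (rule mult_right_mono[OF ei1 ei0])
    qed
    also have "\<dots> \<le> \<rho> * \<mu> * ei"
    proof -
      have "3 * a * D + a \<le> 3 * (a * (D + 1))" using a0 by (simp add: algebra_simps)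
      also have "\<dots> \<le> 3 * (\<rho> / 8)" using aD by simp
      finally have "\<rho> / 2 + 3 * a * D + a \<le> \<rho>" using rho by linarith
      then have "(\<rho> / 2 + 3 * a * D + a) * (\<mu> * ei) \<le> \<rho> * (\<mu> * ei)"
        using mu ei0 by (intro mult_right_mono) auto
      then show ?thesis by (simp add: algebra_simps)
    qed
    also have "\<dots> \<le> \<rho> * \<mu> * (\<rho>^(t div n) * e00)" using ei rho mu by (intro mult_left_mono) auto
    finally show ?thesis .
  qed
  have "real n * \<mu> * norm (x (Suc t) - xs) \<le> norm (Bs *v (x (Suc t) - xs))"
    by (rule coercive_norm[OF co nmu])
  also have "\<dots> \<le> (\<Sum>i\<in>?I. norm (trm i))" unfolding By by (rule norm_sum)
  also have "\<dots> \<le> (\<Sum>i\<in>?I. \<rho> * \<mu> * (\<rho>^(t div n) * e00))" by (rule sum_mono) (rule tb)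
  also have "\<dots> = real n * \<mu> * (\<rho>^(t div n + 1) * e00)" by (simp add: algebra_simps)
  finally have "norm (x (Suc t) - xs) \<le> \<rho>^(t div n + 1) * e00" using nmu by (simp add: mult_le_cancel_left_pos)
  then show ?thesis using inv pd unfolding Bs_def by blast
qed


lemma cc_mult: "cc n (q * n) = q"
proof -
  have e: "q * n + n - 1 = (n - 1) + q * n" using n by simp
  have "cc n (q * n) = ((n - 1) + q * n) div n" by (simp only: cc_def e)
  also have "\<dots> = q + (n - 1) div n" using n by (intro div_mult_self1) simp
  also have "\<dots> = (n - 1) div n + q" by simp
  also have "\<dots> = q" using n by simp
  finally show ?thesis .
qed

lemma fstep:
  assumes I: "Inv t"
  shows "symmetric_matrix (Gm (t mod n + 1) (Suc t)) \<and>
     loewner_le (H (t mod n + 1) (x (Suc t))) (Gm (t mod n + 1) (Suc t)) \<and>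
     nu \<kappa> (Gm (t mod n + 1) (Suc t)) (H (t mod n + 1) (x (Suc t))) \<le> bd (t div n + 1)"
proof -
  define it where "it = t mod n + 1"
  have it: "it \<in> {1..n}" unfolding it_def by (rule it_in)
  define s where "s = lu n it t"
  define q0 where "q0 = t div n"
  have ccs: "cc n s = q0" unfolding s_def q0_def it_def by (rule lu_it(1)[OF n])
  have u0: "q0 * n \<in> {s..t}" unfolding s_def q0_def it_def by (rule lu_it(2)[OF n])
  define \<Omega> where "\<Omega> = prod om {s..t}"
  define xv where "xv = a * \<rho>^q0"
  have xv0: "0 \<le> xv" unfolding xv_def using a0 rho by simp
  have Om: "\<Omega> = (1 + xv)^2"
  proof -
    have "\<Omega> = om (q0 * n)" unfolding \<Omega>_def
    proof (rule prod_window[OF n])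
      show "t < s + n" unfolding s_def using lu_lt[OF n] it by simp
      show "\<And>u. u mod n \<noteq> 0 \<Longrightarrow> om u = 1" by (simp add: om)
    qed (use u0 in auto)
    then show ?thesis by (simp add: om cc_mult xv_def)
  qed
  have Om1: "1 + 2 * xv \<le> \<Omega>" unfolding Om by (simp add: power2_eq_square algebra_simps)
  have Om0: "0 \<le> \<Omega>" unfolding Om by simp
  define G where "G = Gm it s"
  define A0 where "A0 = H it (x s)"
  define A1 where "A1 = H it (x (Suc t))"
  have bk: "B it t = \<Omega> *\<^sub>R G" "z it t = x s"
    using blk[OF it, of t] unfolding s_def G_def \<Omega>_def by auto
  have sG: "symmetric_matrix G" and AG: "loewner_le A0 G" and nuG: "nu \<kappa> G A0 \<le> bd q0"
    using I it ccs unfolding Inv_def s_def G_def A0_def by auto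
  have sA1: "symmetric_matrix A1" unfolding A1_def by (rule Hsym[OF it])
  have zS: "z it (Suc t) = x (Suc t)"
    using run_z[OF it, of "Suc t"] lu_Suc[OF n, of it t] it unfolding it_def by simp
  have xS: "norm (x (Suc t) - xs) \<le> \<rho>^(q0 + 1) * e00" using xstep[OF I] unfolding q0_def by blast
  have xs': "norm (x s - xs) \<le> \<rho>^q0 * e00"
    using I lu_le[of n it t] ccs unfolding Inv_def s_def by auto
  have e00r: "0 \<le> e00" "e00 \<le> r0" unfolding e00_def using e0 by auto
  have Dl: "norm (x (Suc t) - x s) \<le> 2 * \<rho>^q0 * r0"
  proof -
    have "norm (x (Suc t) - x s) \<le> norm (x (Suc t) - xs) + norm (x s - xs)"
      using norm_triangle_ineq4[of "x (Suc t) - xs" "x s - xs"] by simp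
    also have "\<dots> \<le> \<rho>^(q0+1) * e00 + \<rho>^q0 * e00" using xS xs' by simp
    also have "\<dots> \<le> \<rho>^q0 * e00 + \<rho>^q0 * e00"
      using rho rho1 e00r by (intro add_mono mult_right_mono power_decreasing) auto
    also have "\<dots> \<le> 2 * \<rho>^q0 * r0" using e00r rho by (simp add: mult_left_mono)
    finally show ?thesis .
  qed
  define LD where "LD = Lt * norm (x (Suc t) - x s)"
  have LD: "LD \<le> 2 * xv * \<mu>"
  proof -
    have "LD \<le> Lt * (2 * \<rho>^q0 * r0)" unfolding LD_def using Dl Lt by (rule mult_left_mono)
    also have "\<dots> = 2 * \<rho>^q0 * (Lt * r0)" by simp
    also have "\<dots> \<le> 2 * \<rho>^q0 * (a * \<mu>)" using Ltr rho by (intro mult_left_mono) auto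
    finally show ?thesis unfolding xv_def by (simp add: algebra_simps)
  qed
  have mn: "mat_norm (A1 - A0) \<le> LD" "mat_norm (A0 - A1) \<le> LD"
    unfolding A1_def A0_def LD_def using Hlip[OF it, of "x (Suc t)" "x s"] Hlip[OF it, of "x s" "x (Suc t)"]
    by (auto simp: norm_minus_commute)
  have A0p: "0 \<le> v \<bullet> (A0 *v v)" for v unfolding A0_def by (rule H_psd[OF it])
  have A1A0: "v \<bullet> (A1 *v v) \<le> (1 + 2 * xv) * (v \<bullet> (A0 *v v))" for v
  proof -
    have "v \<bullet> (A1 *v v) = v \<bullet> (A0 *v v) + v \<bullet> ((A1 - A0) *v v)"
      by (simp add: matrix_vector_mult_diff_rdistrib inner_diff_right)
    also have "v \<bullet> ((A1 - A0) *v v) \<le> mat_norm (A1 - A0) * norm v * norm v"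
      using dot_le_mat_norm[of v "A1 - A0" v] by simp
    also have "\<dots> \<le> 2 * xv * \<mu> * (v \<bullet> v)"
    proof -
      have "mat_norm (A1 - A0) * norm v * norm v = mat_norm (A1 - A0) * (v \<bullet> v)"
        by (simp add: power2_norm_eq_inner[symmetric] power2_eq_square)
      also have "\<dots> \<le> 2 * xv * \<mu> * (v \<bullet> v)" using mn(1) LD by (intro mult_right_mono) auto
      finally show ?thesis .
    qed
    also have "\<dots> \<le> 2 * xv * (v \<bullet> (A0 *v v))"
      using Hlow[OF it, where y = "x s" and v = v] xv0 unfolding A0_def
      by (simp add: mult.assoc mult_left_mono)
    finally show ?thesis by (simp add: algebra_simps)
  qed
  have le1: "loewner_le A1 (B it t)" unfolding loewner_le_iff
  proof
    fix v
    have "v \<bullet> (A1 *v v) \<le> (1 + 2 * xv) * (v \<bullet> (A0 *v v))" by (rule A1A0)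
    also have "\<dots> \<le> \<Omega> * (v \<bullet> (A0 *v v))" using Om1 A0p[of v] by (rule mult_right_mono)
    also have "\<dots> \<le> \<Omega> * (v \<bullet> (G *v v))" using AG Om0 loewner_le_iff by (metis mult_left_mono)
    finally show "v \<bullet> (A1 *v v) \<le> v \<bullet> (B it t *v v)" using bk(1) by (simp add: scaleR_mv)
  qed
  have sB: "symmetric_matrix (B it t)" using bk(1) sym_scaleR[OF sG] by simp
  have Ek: "is_Ek (B it t - A1) (U t)" using run_step[of t] zS unfolding A1_def it_def by (simp add: Let_def)
  have SR: "symmetric_matrix (SRk (B it t) A1 (U t)) \<and> loewner_le A1 (SRk (B it t) A1 (U t)) \<and>
     trace (SRk (B it t) A1 (U t) - A1) \<le> \<epsilon> * trace (B it t - A1)"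
    using SRk_props[OF sB sA1 le1 Ek] eps by simp
  have BS: "B it (Suc t) = om (Suc t) *\<^sub>R SRk (B it t) A1 (U t)"
    using run_step[of t] zS it unfolding A1_def it_def by (simp add: Let_def)
  have Gm': "Gm it (Suc t) = SRk (B it t) A1 (U t)" unfolding Gm_def BS using om_pos[of "Suc t"] by simp
  define T0 where "T0 = trace A0"
  define T1 where "T1 = trace A1"
  define \<nu>0 where "\<nu>0 = nu \<kappa> G A0"
  have T1p: "0 < T1" unfolding T1_def A1_def by (rule H_trpos[OF it])
  have T1l: "real CARD('d) * \<mu> \<le> T1" unfolding T1_def A1_def using H_tr[OF it] by blast
  have g0: "trace (G - A0) = \<nu>0 * T0 / D" unfolding \<nu>0_def T0_def A0_def by (rule nu_tr[OF it])
  have T0p: "0 < T0" unfolding T0_def A0_def by (rule H_trpos[OF it])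
  have nu0p: "0 \<le> \<nu>0"
  proof -
    have "0 \<le> trace (G - A0)" using AG unfolding loewner_le_def by (rule psd_trace_nonneg)
    then have "0 \<le> \<nu>0 * T0 / D" using g0 by simp
    then show ?thesis using T0p D_pos by (simp add: zero_le_divide_iff zero_le_mult_iff)
  qed
  have T0T1: "T0 \<le> (1 + 2 * xv) * T1"
  proof -
    have "T0 - T1 = trace (A0 - A1)" unfolding T0_def T1_def by (simp add: trace_sub)
    also have "\<dots> \<le> real CARD('d) * mat_norm (A0 - A1)" using trace_le_mat_norm[of "A0 - A1"] by simp
    also have "\<dots> \<le> real CARD('d) * (2 * xv * \<mu>)" using mn(2) LD by (intro mult_left_mono) auto
    also have "\<dots> = 2 * xv * (real CARD('d) * \<mu>)" by simp
    also have "\<dots> \<le> 2 * xv * T1" using T1l xv0 by (intro mult_left_mono) auto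
    finally show ?thesis by (simp add: algebra_simps)
  qed
  define E where "E = (1 + xv)^2 * (1 + 2 * xv)"
  have EO: "E = \<Omega> * (1 + 2 * xv)" unfolding E_def Om by simp
  have trB: "trace (B it t - A1) = \<Omega> * (\<nu>0 * T0 / D) + \<Omega> * T0 - T1"
  proof -
    have "trace (B it t - A1) = \<Omega> * trace G - T1" unfolding bk(1) T1_def by (simp add: trace_sub trace_scaleR)
    moreover have "trace G = \<nu>0 * T0 / D + T0" using g0 unfolding T0_def by (simp add: trace_sub)
    ultimately show ?thesis by (simp add: algebra_simps)
  qed
  have key: "D * trace (B it t - A1) \<le> (E * \<nu>0 + D * (E - 1)) * T1"
  proof -
    have "D * trace (B it t - A1) = \<Omega> * \<nu>0 * T0 + D * \<Omega> * T0 - D * T1"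
      unfolding trB using D_pos by (simp add: field_simps)
    also have "\<dots> \<le> \<Omega> * \<nu>0 * ((1 + 2 * xv) * T1) + D * \<Omega> * ((1 + 2 * xv) * T1) - D * T1"
    proof -
      have "\<Omega> * \<nu>0 * T0 \<le> \<Omega> * \<nu>0 * ((1 + 2 * xv) * T1)"
        using T0T1 Om0 nu0p by (intro mult_left_mono) auto
      moreover have "D * \<Omega> * T0 \<le> D * \<Omega> * ((1 + 2 * xv) * T1)"
        using T0T1 Om0 D_pos by (intro mult_left_mono) auto
      ultimately show ?thesis by linarith
    qed
    also have "\<dots> = (E * \<nu>0 + D * (E - 1)) * T1" unfolding EO by (simp add: algebra_simps)
    finally show ?thesis .
  qed
  have nu1: "nu \<kappa> (Gm it (Suc t)) A1 \<le> \<epsilon> * (E * \<nu>0 + D * (E - 1))"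
  proof -
    have "nu \<kappa> (Gm it (Suc t)) A1 = D * trace (Gm it (Suc t) - A1) / T1"
      unfolding nu_def Dd T1_def by simp
    also have "\<dots> \<le> D * (\<epsilon> * trace (B it t - A1)) / T1"
      using SR D_pos T1p unfolding Gm' by (intro divide_right_mono mult_left_mono) auto
    also have "\<dots> = \<epsilon> * (D * trace (B it t - A1) / T1)" by simp
    also have "\<dots> \<le> \<epsilon> * (E * \<nu>0 + D * (E - 1))"
      using key T1p eps_pos by (intro mult_left_mono) (auto simp: pos_divide_le_eq)
    finally show ?thesis .
  qed
  have "\<epsilon> * (E * \<nu>0 + D * (E - 1)) \<le> bnd \<sigma>0 (4 * D * a) a \<rho> \<epsilon> (Suc q0)"
    by (rule num_step[OF eps_pos a0 less_imp_le[OF rho(1)] less_imp_le[OF D_pos] s0 _ xv_def E_def])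
       (use nuG in \<open>simp add: \<nu>0_def bd_def\<close>)
  then have "nu \<kappa> (Gm it (Suc t)) A1 \<le> bd (t div n + 1)" using nu1 unfolding bd_def q0_def by simp
  then show ?thesis using SR Gm' unfolding it_def[symmetric] A1_def by simp
qed


lemma Inv0: "Inv 0"
  unfolding Inv_def
proof (intro conjI ballI allI impI)
  fix s :: nat assume "s \<le> 0"
  then show "norm (x s - xs) \<le> \<rho>^(cc n s) * e00" by (simp add: cc_0 e00_def)
next
  fix i assume i: "i \<in> {1..n}"
  then have l0: "lu n i 0 = 0" by (simp add: lu_0)
  have ini: "pos_def (B i 0)" "loewner_le (om 0 *\<^sub>R H i (x 0)) (B i 0)"
    "nu \<kappa> ((1 / om 0) *\<^sub>R B i 0) (H i (x 0)) \<le> \<sigma>0" using init[OF i] by auto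
  show "symmetric_matrix (Gm i (lu n i 0))" unfolding l0 Gm_def
    using ini(1) sym_scaleR unfolding pos_def_def by blast
  show "loewner_le (H i (x (lu n i 0))) (Gm i (lu n i 0))" unfolding l0 Gm_def loewner_le_iff
  proof
    fix v
    have "om 0 * (v \<bullet> (H i (x 0) *v v)) \<le> v \<bullet> (B i 0 *v v)"
      using ini(2) unfolding loewner_le_iff by (simp add: scaleR_mv)
    then show "v \<bullet> (H i (x 0) *v v) \<le> v \<bullet> ((1 / om 0) *\<^sub>R B i 0 *v v)"
      using om_pos[of 0] by (simp add: scaleR_mv field_simps)
  qed
  show "nu \<kappa> (Gm i (lu n i 0)) (H i (x (lu n i 0))) \<le> bd (cc n (lu n i 0))"
    unfolding l0 Gm_def bd_def cc_0 bnd_0 using ini(3) .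
qed

lemma Inv_Suc: assumes I: "Inv t" shows "Inv (Suc t)"
  unfolding Inv_def
proof (intro conjI ballI allI impI)
  fix s assume s: "s \<le> Suc t"
  show "norm (x s - xs) \<le> \<rho>^(cc n s) * e00"
  proof (cases "s = Suc t")
    case True then show ?thesis using xstep[OF I] cc_Suc[OF n, of t] by simp
  next
    case False then show ?thesis using I s unfolding Inv_def by auto
  qed
next
  fix i assume i: "i \<in> {1..n}"
  have lu: "lu n i (Suc t) = (if i = t mod n + 1 then Suc t else lu n i t)" using lu_Suc[OF n] i by auto
  have "symmetric_matrix (Gm i (lu n i (Suc t))) \<and> loewner_le (H i (x (lu n i (Suc t)))) (Gm i (lu n i (Suc t))) \<and>
      nu \<kappa> (Gm i (lu n i (Suc t))) (H i (x (lu n i (Suc t)))) \<le> bd (cc n (lu n i (Suc t)))"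
  proof (cases "i = t mod n + 1")
    case True then show ?thesis using fstep[OF I] lu cc_Suc[OF n, of t] by simp
  next
    case False then show ?thesis using I i lu unfolding Inv_def by simp
  qed
  then show "symmetric_matrix (Gm i (lu n i (Suc t)))" "loewner_le (H i (x (lu n i (Suc t)))) (Gm i (lu n i (Suc t)))"
      "nu \<kappa> (Gm i (lu n i (Suc t))) (H i (x (lu n i (Suc t)))) \<le> bd (cc n (lu n i (Suc t)))" by auto
qed

lemma Inv_all: "Inv t"
  by (induction t) (auto intro: Inv0 Inv_Suc)

lemma conclusion:
  shows "(\<forall>t. invertible (\<Sum>i\<in>{1..n}. B i t) \<and> (\<forall>i\<in>{1..n}. pos_def (B i t))) \<and>
     (\<forall>t. let it = t mod n + 1; c = nat \<lceil>real (Suc t) / real n\<rceil> in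
        loewner_le (H it (z it (Suc t))) ((1 / om (Suc t)) *\<^sub>R B it (Suc t)) \<and>
        norm (x (Suc t) - xs) \<le> \<rho> ^ c * norm (x 0 - xs) \<and>
        nu \<kappa> ((1 / om (Suc t)) *\<^sub>R B it (Suc t)) (H it (z it (Suc t))) \<le> \<epsilon> ^ c * \<delta>0)"
proof (rule conjI)
  show "\<forall>t. invertible (\<Sum>i\<in>{1..n}. B i t) \<and> (\<forall>i\<in>{1..n}. pos_def (B i t))" using xstep[OF Inv_all] by blast
next
  show "\<forall>t. let it = t mod n + 1; c = nat \<lceil>real (Suc t) / real n\<rceil> in
        loewner_le (H it (z it (Suc t))) ((1 / om (Suc t)) *\<^sub>R B it (Suc t)) \<and>
        norm (x (Suc t) - xs) \<le> \<rho> ^ c * norm (x 0 - xs) \<and>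
        nu \<kappa> ((1 / om (Suc t)) *\<^sub>R B it (Suc t)) (H it (z it (Suc t))) \<le> \<epsilon> ^ c * \<delta>0"
  proof
  fix t
  define it where "it = t mod n + 1"
  have it: "it \<in> {1..n}" unfolding it_def by (rule it_in)
  have c: "nat \<lceil>real (Suc t) / real n\<rceil> = t div n + 1"
    using cc_ceiling[OF n, of "Suc t"] cc_Suc[OF n, of t] by (simp only:)
  have zS: "z it (Suc t) = x (Suc t)"
    using run_z[OF it, of "Suc t"] lu_Suc[OF n, of it t] it unfolding it_def by simp
  have luS: "lu n it (Suc t) = Suc t" using lu_Suc[OF n, of it t] it unfolding it_def by simp
  have F: "loewner_le (H it (x (Suc t))) (Gm it (Suc t)) \<and> nu \<kappa> (Gm it (Suc t)) (H it (x (Suc t))) \<le> bd (t div n + 1)"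
    using fstep[OF Inv_all[of t]] unfolding it_def by simp
  have X: "norm (x (Suc t) - xs) \<le> \<rho>^(t div n + 1) * norm (x 0 - xs)"
    using xstep[OF Inv_all[of t]] unfolding e00_def by blast
  have "bd (t div n + 1) \<le> \<epsilon>^(t div n + 1) * \<delta>0" by (rule bd_final)
  then show "let it = t mod n + 1; c = nat \<lceil>real (Suc t) / real n\<rceil> in
        loewner_le (H it (z it (Suc t))) ((1 / om (Suc t)) *\<^sub>R B it (Suc t)) \<and>
        norm (x (Suc t) - xs) \<le> \<rho> ^ c * norm (x 0 - xs) \<and>
        nu \<kappa> ((1 / om (Suc t)) *\<^sub>R B it (Suc t)) (H it (z it (Suc t))) \<le> \<epsilon> ^ c * \<delta>0"
    unfolding Let_def it_def[symmetric] c zS using F X unfolding Gm_def by auto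
  qed
qed

end


lemma powr_32: assumes "0 < (m::real)" shows "m powr (3/2) = m * sqrt m"
proof -
  have "m powr (3/2) = m powr (1 + 1/2)" by simp
  also have "\<dots> = m powr 1 * m powr (1/2)" by (rule powr_add)
  also have "\<dots> = m * sqrt m" using assms by (simp add: powr_half_sqrt)
  finally show ?thesis .
qed

lemma powr_m32: assumes "0 < (m::real)" shows "m powr (-3/2) = 1 / (m * sqrt m)"
proof -
  have "m powr (-3/2) = m powr (- (3/2))" by simp
  also have "\<dots> = inverse (m powr (3/2))" by (rule powr_minus)
  also have "\<dots> = 1 / (m * sqrt m)" by (simp only: powr_32[OF assms] inverse_eq_divide)
  finally show ?thesis .
qed

theorem lemma2:
  fixes n :: nat
    and f :: "nat \<Rightarrow> real^'d \<Rightarrow> real"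
    and g :: "nat \<Rightarrow> real^'d \<Rightarrow> real^'d"
    and H :: "nat \<Rightarrow> real^'d \<Rightarrow> real^'d^'d"
    and \<mu> L Lt \<rho> :: real
    and xstar :: "real^'d"
  assumes n: "n \<ge> 1"
    and kd: "CARD('k) < CARD('d)"
    and mu: "0 < \<mu>" and muL: "\<mu> \<le> L"
    and grad: "\<And>i x. i \<in> {1..n} \<Longrightarrow> (f i has_derivative (\<lambda>h. g i x \<bullet> h)) (at x)"
    and hess: "\<And>i x. i \<in> {1..n} \<Longrightarrow> (g i has_derivative (\<lambda>h. H i x *v h)) (at x)"
    and bounds: "\<And>i x. i \<in> {1..n} \<Longrightarrow>
        loewner_le (\<mu> *\<^sub>R mat 1) (H i x) \<and> loewner_le (H i x) (L *\<^sub>R mat 1)"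
    and lip: "\<And>i x y. i \<in> {1..n} \<Longrightarrow> mat_norm (H i x - H i y) \<le> Lt * norm (x - y)"
    and xstar: "\<And>x. (1 / real n) * (\<Sum>i\<in>{1..n}. f i xstar) \<le> (1 / real n) * (\<Sum>i\<in>{1..n}. f i x)"
    and rho: "0 < \<rho>" "\<rho> < 1 - real CARD('k) / real CARD('d)"
  shows "\<exists>r0 > 0. \<exists>\<sigma>0 > 0. \<forall>(x :: nat \<Rightarrow> real^'d) z B (U :: nat \<Rightarrow> real^'k^'d).
     (let \<kappa> = L / \<mu>; M = Lt * \<mu> powr (-3/2); d = real CARD('d); k = real CARD('k);
          om = lisr_omega M L r0 \<rho> n;
          \<delta> = (\<sigma>0 + 4 * M * d * L powr (3/2) * (1/\<mu>) * r0 / (1 - \<rho> / (1 - k / d)))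
               * exp (4 * M * sqrt L * r0 / (1 - \<rho>))
      in (lisr_run n g H om x z B U \<and> norm (x 0 - xstar) \<le> r0 \<and>
          (\<forall>i\<in>{1..n}. pos_def (B i 0) \<and> loewner_le (om 0 *\<^sub>R H i (x 0)) (B i 0) \<and>
                       nu \<kappa> ((1 / om 0) *\<^sub>R B i 0) (H i (x 0)) \<le> \<sigma>0))
      \<longrightarrow>
         (\<forall>t. invertible (\<Sum>i\<in>{1..n}. B i t) \<and> (\<forall>i\<in>{1..n}. pos_def (B i t))) \<and>
         (\<forall>t. let it = t mod n + 1; c = nat \<lceil>real (Suc t) / real n\<rceil> in
            loewner_le (H it (z it (Suc t))) ((1 / om (Suc t)) *\<^sub>R B it (Suc t)) \<and>
            norm (x (Suc t) - xstar) \<le> \<rho> ^ c * norm (x 0 - xstar) \<and>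
            nu \<kappa> ((1 / om (Suc t)) *\<^sub>R B it (Suc t)) (H it (z it (Suc t))) \<le> (1 - k / d) ^ c * \<delta>))"
proof -
  define dd where "dd = real CARD('d)"
  define kk where "kk = real CARD('k)"
  define \<epsilon> where "\<epsilon> = 1 - kk / dd"
  define \<kappa> where "\<kappa> = L / \<mu>"
  define D where "D = dd * \<kappa>"
  define M where "M = Lt * \<mu> powr (-3/2)"
  define c0 where "c0 = M * sqrt L"
  have n1: "1 \<le> n" using n .
  have L0: "0 < L" using mu muL by simp
  have Dp: "0 < D" unfolding D_def dd_def \<kappa>_def using mu L0 by simp
  have eps1: "\<epsilon> \<le> 1" unfolding \<epsilon>_def kk_def dd_def by simp
  have rhoe: "\<rho> < \<epsilon>" unfolding \<epsilon>_def kk_def dd_def using rho by simp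
  have rho1: "\<rho> < 1" using rhoe eps1 by simp
  have epsp: "0 < \<epsilon>" using rho rhoe by simp
  have one_in: "1 \<in> {1..n}" using n by simp
  have Lt0: "0 \<le> Lt"
  proof -
    obtain j :: 'd where True by blast
    let ?v = "axis j (1::real)"
    have "0 \<le> mat_norm (H 1 0 - H 1 ?v)" by (rule mat_norm_nonneg)
    also have "\<dots> \<le> Lt * norm (0 - ?v)" by (rule lip[OF one_in])
    finally have "0 \<le> Lt * norm ?v" by simp
    moreover have "0 < norm ?v" by simp
    ultimately show ?thesis by (simp add: zero_le_mult_iff)
  qed
  have M0: "0 \<le> M" unfolding M_def using Lt0 by simp
  have c00: "0 \<le> c0" unfolding c0_def using M0 L0 by simp
  have ln2: "0 < ln (2::real)" by simp
  define amax where "amax = min (min 1 (\<rho> / (8 * (D + 1)))) (min ((1 - \<rho>) * ln 2 / 4) (\<rho> * (1 - \<rho> / \<epsilon>) / (128 * (D + 1))))"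
  have re: "0 < 1 - \<rho> / \<epsilon>" using rhoe epsp by (simp add: field_simps)
  have amaxp: "0 < amax" unfolding amax_def using rho rho1 Dp re ln2 by simp
  define r0 where "r0 = amax / (c0 + 1)"
  define \<sigma>0 where "\<sigma>0 = \<rho> / 32"
  define a where "a = c0 * r0"
  have r0p: "0 < r0" unfolding r0_def using amaxp c00 by simp
  have s0p: "0 < \<sigma>0" unfolding \<sigma>0_def using rho by simp
  have a0: "0 \<le> a" unfolding a_def using c00 r0p by simp
  have aam: "a \<le> amax"
  proof -
    have "a = amax * (c0 / (c0 + 1))" unfolding a_def r0_def by simp
    also have "\<dots> \<le> amax * 1" using amaxp c00 by (intro mult_left_mono) auto
    finally show ?thesis by simp
  qed
  have a1: "a \<le> 1" using aam unfolding amax_def by simp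
  have aD: "a * (D + 1) \<le> \<rho> / 8"
  proof -
    have "a \<le> \<rho> / (8 * (D + 1))" using aam unfolding amax_def by simp
    then show ?thesis using Dp by (simp add: field_simps)
  qed
  have Ltr: "Lt * r0 \<le> a * \<mu>"
  proof -
    have sq: "sqrt \<mu> \<le> sqrt L" using muL by simp
    have sm: "0 < sqrt \<mu>" using mu by simp
    have "a * \<mu> = Lt * r0 * (sqrt L / sqrt \<mu>)"
      unfolding a_def c0_def M_def powr_m32[OF mu] using mu sm by (simp add: field_simps)
    moreover have "1 \<le> sqrt L / sqrt \<mu>" using sq sm by simp
    moreover have "0 \<le> Lt * r0" using Lt0 r0p by simp
    ultimately show ?thesis by (metis mult_le_cancel_left1 linorder_not_le order_less_imp_le
          mult.commute mult_right_mono mult_1_right order_trans)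
  qed
  have del: "(\<sigma>0 + 4 * D * a / (1 - \<rho> / \<epsilon>)) * exp (4 * a / (1 - \<rho>)) \<le> \<rho> / 8"
  proof -
    have "a \<le> \<rho> * (1 - \<rho> / \<epsilon>) / (128 * (D + 1))" using aam unfolding amax_def by simp
    then have "4 * D * a \<le> 4 * D * (\<rho> * (1 - \<rho> / \<epsilon>) / (128 * (D + 1)))"
      by (rule mult_left_mono) (use Dp in simp)
    also have "\<dots> = (\<rho> * (1 - \<rho> / \<epsilon>) / 32) * (D / (D + 1))" using Dp by (simp add: field_simps)
    also have "\<dots> \<le> (\<rho> * (1 - \<rho> / \<epsilon>) / 32) * 1" using Dp rho re by (intro mult_left_mono) auto
    finally have "4 * D * a / (1 - \<rho> / \<epsilon>) \<le> \<rho> / 32" using re by (simp add: field_simps)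
    then have A: "\<sigma>0 + 4 * D * a / (1 - \<rho> / \<epsilon>) \<le> \<rho> / 16" unfolding \<sigma>0_def by simp
    have "a \<le> (1 - \<rho>) * ln 2 / 4" using aam unfolding amax_def by simp
    then have "4 * a / (1 - \<rho>) \<le> ln 2" using rho1 by (simp add: field_simps)
    then have B: "exp (4 * a / (1 - \<rho>)) \<le> 2" by (metis exp_le_cancel_iff exp_ln zero_less_numeral)
    have "0 \<le> \<sigma>0 + 4 * D * a / (1 - \<rho> / \<epsilon>)" using s0p Dp a0 re by simp
    then have "(\<sigma>0 + 4 * D * a / (1 - \<rho> / \<epsilon>)) * exp (4 * a / (1 - \<rho>)) \<le> (\<rho> / 16) * 2"
      using A B by (intro mult_mono) auto
    then show ?thesis by simp
  qed
  have Hsym: "\<And>i y. i \<in> {1..n} \<Longrightarrow> symmetric_matrix (H i y)"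
    using hess_sym[OF grad hess lip Lt0] by blast
  have Hlow: "\<And>i y v. i \<in> {1..n} \<Longrightarrow> \<mu> * (v \<bullet> v) \<le> v \<bullet> (H i y *v v)"
    using bounds unfolding loewner_le_iff by (simp add: scaleR_mv)
  have Hup: "\<And>i y v. i \<in> {1..n} \<Longrightarrow> v \<bullet> (H i y *v v) \<le> L * (v \<bullet> v)"
    using bounds unfolding loewner_le_iff by (simp add: scaleR_mv)
  have tay: "\<And>i y y'. i \<in> {1..n} \<Longrightarrow> norm (g i y - g i y' - H i y *v (y - y')) \<le> Lt * (norm (y - y'))^2"
    using taylor_grad[OF hess lip Lt0] by blast
  have gsum: "(\<Sum>i\<in>{1..n}. g i xstar) = 0"
  proof (rule grad_zero[where f = f])
    show "finite {1..n}" by simp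
    show "\<And>i y. i \<in> {1..n} \<Longrightarrow> (f i has_derivative (\<lambda>k. g i y \<bullet> k)) (at y)" by (rule grad)
    fix y
    have "(1 / real n) * (\<Sum>i\<in>{1..n}. f i xstar) \<le> (1 / real n) * (\<Sum>i\<in>{1..n}. f i y)" by (rule xstar)
    then show "(\<Sum>i\<in>{1..n}. f i xstar) \<le> (\<Sum>i\<in>{1..n}. f i y)"
      by (rule mult_left_le_imp_le) (use n in simp)
  qed
  have om: "\<And>u. lisr_omega M L r0 \<rho> n u = (if u mod n = 0 then (1 + a * \<rho>^(cc n u))^2 else 1)"
    unfolding lisr_omega_def a_def c0_def using cc_ceiling[OF n1] by (simp add: mult.assoc)
  have dl: "(\<sigma>0 + 4 * M * dd * L powr (3/2) * (1/\<mu>) * r0 / (1 - \<rho> / \<epsilon>)) * exp (4 * M * sqrt L * r0 / (1 - \<rho>))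
      = (\<sigma>0 + 4 * D * a / (1 - \<rho> / \<epsilon>)) * exp (4 * a / (1 - \<rho>))"
    unfolding D_def \<kappa>_def a_def c0_def powr_32[OF L0] by (simp add: field_simps)
  show ?thesis
    unfolding Let_def
    apply (rule exI[of _ r0], rule conjI[OF r0p], rule exI[of _ \<sigma>0], rule conjI[OF s0p], intro allI impI)
    subgoal premises h for x z B U
    proof -
      interpret C: lctx n g H \<mu> L Lt \<rho> \<epsilon> \<kappa> D a r0 \<sigma>0 xstar x z B U "lisr_omega M L r0 \<rho> n"
      proof (unfold_locales)
      qed (use n mu muL Lt0 rho rhoe kd Hsym Hlow Hup lip tay gsum om a0 a1 aD Ltr s0p del h in
           \<open>auto simp: \<kappa>_def D_def dd_def \<epsilon>_def kk_def M_def\<close>)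
      have dl': "C.\<delta>0 = (\<sigma>0 + 4 * M * dd * L powr (3/2) * (1/\<mu>) * r0 / (1 - \<rho> / \<epsilon>)) * exp (4 * M * sqrt L * r0 / (1 - \<rho>))"
        using dl unfolding C.\<delta>0_def by simp
      have cc: "?thesis" using C.conclusion[unfolded dl'] unfolding Let_def M_def \<kappa>_def \<epsilon>_def kk_def dd_def
        by simp
      show ?thesis by (rule cc)
    qed
    done
qed



end
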